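(* Let $\kappa\ge0$ satisfy $18^2\alpha_0(\kappa)(2+\alpha_0(\kappa))<1$, and let $e\in E_N^+$ with $\partial\hat\partial\partial\hat\partial e\subseteq E_N$. Then $$\mu_{N,\infty,\kappa}(\{\sigma'\in\Sigma^0_{E_N}:\sigma'_e\ne0\})\le C_I\,\alpha_0(\kappa)^8,\qquad C_I=\frac{18^{13}}{1-18^2\alpha_0(\kappa)}.$$
   Context: $G=\mathbb Z_n$, $\rho$ faithful unitary one-dimensional. On $\mathbb Z^4$: $E_N$ oriented edges with vertices in $B_N=[-N,N]^4\cap\mathbb Z^4$, $E_N^+$ the positively oriented ones ($(x,x+\mathbf e_j)$); $\partial p$ oriented boundary edges of a plaquette; $\hat\partial e=\{p:e\in\partial p\}$; for sets $\partial A=\bigcup_{p\in A}\partial p$, $\hat\partial B=\bigcup_{e\in B}\hat\partial e$. $\Sigma^0_{E_N}$: $\sigma:E_N\to G$ with $\sigma_{-e}=-\sigma_e$ and $\sum_{e\in\partial p}\sigma_e=0$ for all plaquettes $p$ in $B_N$. $\mu_{N,\infty,\kappa}(\sigma)\propto\exp(\kappa\sum_{e\in E_N}\rho(\sigma_e))$ on $\Sigma^0_{E_N}$. $\alpha_0(\kappa)=\sum_{g\ne0}e^{2\kappa(\mathrm{Re}\rho(g)-1)}$. *)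

theory Defs
  imports "HOL-Analysis.Analysis"
begin

type_synonym vertex = "int ^ 4"
type_synonym edge = "vertex \<times> vertex"
type_synonym plaquette = "vertex \<times> 4 \<times> 4"

definition unitv :: "4 \<Rightarrow> vertex" where
  "unitv j = (\<chi> i. if i = j then 1 else 0)"

definition box :: "nat \<Rightarrow> vertex set" where
  "box N = {x. \<forall>i. \<bar>x $ i\<bar> \<le> int N}"

definition edges :: "nat \<Rightarrow> edge set" where
  "edges N = {(x, y). x \<in> box N \<and> y \<in> box N \<and>
                 (\<exists>j. y = x + unitv j \<or> x = y + unitv j)}"

definition pos_edges :: "nat \<Rightarrow> edge set" where
  "pos_edges N = {(x, y). x \<in> box N \<and> y \<in> box N \<and> (\<exists>j. y = x + unitv j)}"

definition rev_edge :: "edge \<Rightarrow> edge" where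
  "rev_edge e = (snd e, fst e)"

text \<open>Oriented plaquettes of Z^4: (x,j,k) with j \<noteq> k is the plaquette with corners
  x, x+e_j, x+e_j+e_k, x+e_k traversed in this order; (x,k,j) is the same plaquette
  with opposite orientation.\<close>
definition plaquettes :: "plaquette set" where
  "plaquettes = {(x, j, k). j \<noteq> k}"

definition bd :: "plaquette \<Rightarrow> edge set" where
  "bd p = (case p of (x, j, k) \<Rightarrow>
     {(x, x + unitv j), (x + unitv j, x + unitv j + unitv k),
      (x + unitv j + unitv k, x + unitv k), (x + unitv k, x)})"

definition cobd :: "edge \<Rightarrow> plaquette set" where
  "cobd e = {p \<in> plaquettes. e \<in> bd p}"

definition bdS :: "plaquette set \<Rightarrow> edge set" where
  "bdS A = (\<Union>p\<in>A. bd p)"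

definition cobdS :: "edge set \<Rightarrow> plaquette set" where
  "cobdS B = (\<Union>e\<in>B. cobd e)"

text \<open>Gauge group Z_n: configurations take values in the representatives {0..<n};
  group operations are taken mod n.  Configurations are extended by 0 outside E_N.\<close>
definition flat_configs :: "nat \<Rightarrow> int \<Rightarrow> (edge \<Rightarrow> int) set" where
  "flat_configs N n = {\<sigma>.
      (\<forall>e. e \<notin> edges N \<longrightarrow> \<sigma> e = 0) \<and>
      (\<forall>e\<in>edges N. 0 \<le> \<sigma> e \<and> \<sigma> e < n) \<and>
      (\<forall>e\<in>edges N. \<sigma> (rev_edge e) = (- \<sigma> e) mod n) \<and>
      (\<forall>p\<in>plaquettes. bd p \<subseteq> edges N \<longrightarrow> (\<Sum>e\<in>bd p. \<sigma> e) mod n = 0)}"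

definition weight :: "nat \<Rightarrow> (int \<Rightarrow> complex) \<Rightarrow> real \<Rightarrow> (edge \<Rightarrow> int) \<Rightarrow> real" where
  "weight N \<rho> \<kappa> \<sigma> = exp (\<kappa> * Re (\<Sum>e\<in>edges N. \<rho> (\<sigma> e)))"

definition mu :: "nat \<Rightarrow> int \<Rightarrow> (int \<Rightarrow> complex) \<Rightarrow> real \<Rightarrow> (edge \<Rightarrow> int) set \<Rightarrow> real" where
  "mu N n \<rho> \<kappa> A =
     (\<Sum>\<sigma>\<in>A \<inter> flat_configs N n. weight N \<rho> \<kappa> \<sigma>) /
     (\<Sum>\<sigma>\<in>flat_configs N n. weight N \<rho> \<kappa> \<sigma>)"

definition alpha0 :: "int \<Rightarrow> (int \<Rightarrow> complex) \<Rightarrow> real \<Rightarrow> real" where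
  "alpha0 n \<rho> \<kappa> = (\<Sum>g\<in>{1..<n}. exp (2 * \<kappa> * (Re (\<rho> g) - 1)))"

text \<open>rho: a faithful unitary one-dimensional representation of Z_n, written as a
  character of Z whose kernel is exactly nZ.\<close>
definition faithful_char :: "int \<Rightarrow> (int \<Rightarrow> complex) \<Rightarrow> bool" where
  "faithful_char n \<rho> \<longleftrightarrow> (\<forall>a b. \<rho> (a + b) = \<rho> a * \<rho> b) \<and>
      (\<forall>a. cmod (\<rho> a) = 1) \<and> (\<forall>a. \<rho> a = 1 \<longleftrightarrow> n dvd a)"

end

theory Submission
  imports Defs
begin


lemma unitv_nth[simp]: "unitv j $ i = (if i = j then 1 else 0)"
  by (simp add: unitv_def)
lemma unitv_inj[simp]: "unitv a = unitv b \<longleftrightarrow> a = b"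
  by (auto simp: vec_eq_iff)

lemma finite_box: "finite (box N)"
proof -
  have "box N \<subseteq> (\<lambda>f. \<chi> i. f i) ` (PiE UNIV (\<lambda>_. {-int N..int N}))"
  proof
    fix x assume "x \<in> box N"
    hence "(\<lambda>i. x $ i) \<in> PiE UNIV (\<lambda>_. {-int N..int N})" by (auto simp: box_def abs_le_iff) (metis minus_le_iff)
    moreover have "x = (\<chi> i. (\<lambda>i. x $ i) i)" by simp
    ultimately show "x \<in> (\<lambda>f. \<chi> i. f i) ` (PiE UNIV (\<lambda>_. {-int N..int N}))" by blast
  qed
  thus ?thesis by (rule finite_subset) (intro finite_imageI finite_PiE; simp)
qed

lemma finite_edges: "finite (edges N)"
  by (rule finite_subset[of _ "box N \<times> box N"]) (auto simp: edges_def finite_box)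

lemma pos_sub: "pos_edges N \<subseteq> edges N"
  by (auto simp: pos_edges_def edges_def)

lemma finite_pos: "finite (pos_edges N)"
  using finite_edges pos_sub finite_subset by blast

lemma rev_rev[simp]: "rev_edge (rev_edge f) = f" by (simp add: rev_edge_def)

lemma rev_edges: "f \<in> edges N \<Longrightarrow> rev_edge f \<in> edges N"
  by (auto simp: edges_def rev_edge_def)

lemma unitv_sum_ne0: "unitv a + unitv b \<noteq> (0::vertex)"
proof
  assume "unitv a + unitv b = (0::vertex)"
  hence "(unitv a + unitv b) $ a = (0::vertex) $ a" by simp
  thus False by (simp split: if_splits)
qed

lemma pos_not_rev: "f \<in> pos_edges N \<Longrightarrow> rev_edge f \<notin> pos_edges N"
proof
  assume a: "f \<in> pos_edges N" "rev_edge f \<in> pos_edges N"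
  then obtain j k where "snd f = fst f + unitv j" "fst f = snd f + unitv k"
    by (auto simp: pos_edges_def rev_edge_def split: prod.splits)
  hence "fst f = fst f + (unitv j + unitv k)" by (simp add: algebra_simps)
  hence "unitv j + unitv k = (0::vertex)" by (metis add_cancel_left_right)
  thus False using unitv_sum_ne0 by blast
qed

lemma edges_split: "f \<in> edges N \<Longrightarrow> f \<in> pos_edges N \<or> rev_edge f \<in> pos_edges N"
  by (auto simp: edges_def pos_edges_def rev_edge_def)

lemma finite_flat: "finite (flat_configs N n)"
proof -
  have "inj_on (\<lambda>\<sigma>. restrict \<sigma> (edges N)) (flat_configs N n)"
  proof (rule inj_onI)
    fix s t assume "s \<in> flat_configs N n" "t \<in> flat_configs N n"
      "restrict s (edges N) = restrict t (edges N)"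
    thus "s = t" unfolding flat_configs_def restrict_def
      by (auto simp: fun_eq_iff) (metis)
  qed
  moreover have "(\<lambda>\<sigma>. restrict \<sigma> (edges N)) ` (flat_configs N n) \<subseteq> PiE (edges N) (\<lambda>_. {0..<n})"
    by (auto simp: flat_configs_def)
  moreover have "finite (PiE (edges N) (\<lambda>_. {0..<n}))"
    by (intro finite_PiE finite_edges) auto
  ultimately show ?thesis using finite_imageD finite_subset by metis
qed

lemma zero_flat: "n \<ge> 2 \<Longrightarrow> (\<lambda>_. 0) \<in> flat_configs N n"
  by (simp add: flat_configs_def)

lemma rho0: "faithful_char n \<rho> \<Longrightarrow> \<rho> 0 = 1"
  by (simp add: faithful_char_def)

lemma rho_mod: assumes "faithful_char n \<rho>" shows "\<rho> (a mod n) = \<rho> a"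
proof -
  have "a = a mod n + n * (a div n)" by simp
  hence "\<rho> a = \<rho> (a mod n) * \<rho> (n * (a div n))" using assms
    by (metis faithful_char_def)
  moreover have "\<rho> (n * (a div n)) = 1" using assms by (simp add: faithful_char_def)
  ultimately show ?thesis by simp
qed

lemma rho_neg: assumes "faithful_char n \<rho>" shows "\<rho> (-a) = cnj (\<rho> a)"
proof -
  have "\<rho> (-a) * \<rho> a = 1" using assms
    by (metis faithful_char_def add.left_inverse dvd_0_right)
  moreover have "cmod (\<rho> a) = 1" using assms by (simp add: faithful_char_def)
  hence "cnj (\<rho> a) * \<rho> a = 1" by (metis complex_norm_square mult.commute of_real_1 power_one)
  ultimately show ?thesis
    by (metis mult_cancel_right mult_zero_left zero_neq_one)
qed

lemma Re_rho_negmod: "faithful_char n \<rho> \<Longrightarrow> Re (\<rho> ((-a) mod n)) = Re (\<rho> a)"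
  by (simp add: rho_mod rho_neg)


lemma bd_sum:
  assumes "a \<noteq> b"
  shows "(\<Sum>f\<in>bd (z,a,b). (\<sigma>::edge\<Rightarrow>int) f) = \<sigma> (z, z+unitv a) + \<sigma> (z+unitv a, z+unitv a+unitv b)
     + \<sigma> (z+unitv a+unitv b, z+unitv b) + \<sigma> (z+unitv b, z)"
proof -
  have d1: "z \<noteq> z + unitv a" "z \<noteq> z + unitv b" "z + unitv a \<noteq> z + unitv b"
       "z \<noteq> z + unitv a + unitv b" "z+unitv a \<noteq> z + unitv a + unitv b"
       "z+unitv b \<noteq> z + unitv a + unitv b"
    using assms by (auto simp: vec_eq_iff)
  show ?thesis unfolding bd_def using d1 by (simp add: algebra_simps)
qed

lemma edge_in: "u \<in> box N \<Longrightarrow> u + unitv d \<in> box N \<Longrightarrow> (u, u + unitv d) \<in> edges N"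
  by (auto simp: edges_def)
lemma edge_in': "u \<in> box N \<Longrightarrow> u + unitv d \<in> box N \<Longrightarrow> (u + unitv d, u) \<in> edges N"
  by (auto simp: edges_def)
lemma pedge_in: "u \<in> box N \<Longrightarrow> u + unitv d \<in> box N \<Longrightarrow> (u, u + unitv d) \<in> pos_edges N"
  by (auto simp: pos_edges_def)

lemma plaq:
  assumes fl: "\<sigma> \<in> flat_configs N n" and ab: "a \<noteq> b"
    and b1: "z \<in> box N" "z + unitv a \<in> box N" "z + unitv b \<in> box N" "z + unitv a + unitv b \<in> box N"
  shows "n dvd (\<sigma> (z, z+unitv a) + \<sigma> (z+unitv a, z+unitv a+unitv b)
           - \<sigma> (z+unitv b, z+unitv b+unitv a) - \<sigma> (z, z+unitv b))"
proof -
  have c: "z + unitv b + unitv a = z + unitv a + unitv b" by (simp add: algebra_simps)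
  have bdE: "bd (z,a,b) \<subseteq> edges N"
  proof -
    have "(z, z+unitv a) \<in> edges N" using b1 by (intro edge_in)
    moreover have "(z+unitv a, z+unitv a+unitv b) \<in> edges N" using b1 by (intro edge_in)
    moreover have "(z+unitv b+unitv a, z+unitv b) \<in> edges N" using b1 c by (intro edge_in'; simp add: c)
    moreover have "(z+unitv b, z) \<in> edges N" using b1 by (intro edge_in')
    ultimately show ?thesis unfolding bd_def using c by auto
  qed
  have p: "(z,a,b) \<in> plaquettes" using ab by (simp add: plaquettes_def)
  have s0: "(\<Sum>f\<in>bd (z,a,b). \<sigma> f) mod n = 0" using fl p bdE by (auto simp: flat_configs_def)
  have e3: "(z + unitv b, z + unitv b + unitv a) \<in> edges N" using b1 c by (intro edge_in; simp add: c)
  have e4: "(z, z + unitv b) \<in> edges N" using b1 by (auto intro: edge_in)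
  have r3: "\<sigma> (z+unitv a+unitv b, z+unitv b) = (- \<sigma> (z + unitv b, z + unitv b + unitv a)) mod n"
  proof -
    have "\<sigma> (rev_edge (z + unitv b, z + unitv b + unitv a)) = (- \<sigma> (z + unitv b, z + unitv b + unitv a)) mod n"
      using fl e3 unfolding flat_configs_def by blast
    moreover have "rev_edge (z + unitv b, z + unitv b + unitv a) = (z+unitv a+unitv b, z+unitv b)"
      by (simp add: rev_edge_def c)
    ultimately show ?thesis by simp
  qed
  have r4: "\<sigma> (z+unitv b, z) = (- \<sigma> (z, z + unitv b)) mod n"
  proof -
    have "\<sigma> (rev_edge (z, z + unitv b)) = (- \<sigma> (z, z + unitv b)) mod n"
      using fl e4 unfolding flat_configs_def by blast
    thus ?thesis by (simp add: rev_edge_def)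
  qed
  have "(\<sigma> (z, z+unitv a) + \<sigma> (z+unitv a, z+unitv a+unitv b)
           + (- \<sigma> (z+unitv b, z+unitv b+unitv a)) mod n + (- \<sigma> (z, z+unitv b)) mod n) mod n = 0"
    using s0 bd_sum[OF ab, where z=z and \<sigma>=\<sigma>] r3 r4 by simp
  hence d0: "n dvd (\<sigma> (z, z+unitv a) + \<sigma> (z+unitv a, z+unitv a+unitv b)
           + (- \<sigma> (z+unitv b, z+unitv b+unitv a)) mod n + (- \<sigma> (z, z+unitv b)) mod n)"
    by (simp add: dvd_eq_mod_eq_0)
  have dm: "n dvd ((x::int) mod n - x)" for x by (simp add: mod_eq_dvd_iff[symmetric])
  have "n dvd ((\<sigma> (z, z+unitv a) + \<sigma> (z+unitv a, z+unitv a+unitv b)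
           + (- \<sigma> (z+unitv b, z+unitv b+unitv a)) mod n + (- \<sigma> (z, z+unitv b)) mod n)
      - ((- \<sigma> (z+unitv b, z+unitv b+unitv a)) mod n - (- \<sigma> (z+unitv b, z+unitv b+unitv a)))
      - ((- \<sigma> (z, z+unitv b)) mod n - (- \<sigma> (z, z+unitv b))))"
    by (rule dvd_diff[OF dvd_diff[OF d0 dm] dm])
  thus ?thesis by (simp add: algebra_simps)
qed


definition inb :: "nat \<Rightarrow> vertex \<Rightarrow> 4 \<Rightarrow> bool" where
  "inb N x j \<longleftrightarrow> - int N \<le> x$j - 1 \<and> x$j + 2 \<le> int N \<and>
     (\<forall>i. i \<noteq> j \<longrightarrow> - int N \<le> x$i - 1 \<and> x$i + 1 \<le> int N)"

lemma in_box:
  assumes "inb N x j" "(y - x)$j \<in> {-1..2}" "\<forall>i. i \<noteq> j \<longrightarrow> (y - x)$i \<in> {-1..1}"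
  shows "y \<in> box N"
  unfolding box_def
proof (intro CollectI allI)
  fix i
  have yi: "y$i = x$i + (y-x)$i" by simp
  show "\<bar>y$i\<bar> \<le> int N"
  proof (cases "i = j")
    case True
    then show ?thesis using assms(1,2) yi unfolding inb_def by (simp del: vector_minus_component add: abs_le_iff)
  next
    case False
    then have "(y - x)$i \<in> {-1..1}" "- int N \<le> x$i - 1" "x$i + 1 \<le> int N"
      using assms(1,3) unfolding inb_def by blast+
    then show ?thesis using yi by (simp del: vector_minus_component add: abs_le_iff)
  qed
qed

lemma Hmem: "p1 \<in> plaquettes \<Longrightarrow> e \<in> bd p1 \<Longrightarrow> f \<in> bd p1 \<Longrightarrow> p \<in> plaquettes \<Longrightarrow> f \<in> bd p
   \<Longrightarrow> g \<in> bd p \<Longrightarrow> g \<in> bdS (cobdS (bdS (cobd e)))"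
  unfolding bdS_def cobdS_def cobd_def by blast

lemma box_abs: "u \<in> box N \<Longrightarrow> \<bar>u $ i\<bar> \<le> int N" by (simp add: box_def)

lemma edges_box: "f \<in> edges N \<Longrightarrow> fst f \<in> box N \<and> snd f \<in> box N"
  by (auto simp: edges_def)

lemma hyp_inb:
  assumes H: "bdS (cobdS (bdS (cobd (x, x + unitv j)))) \<subseteq> edges N"
  shows "inb N x j"
proof -
  obtain k where kj: "k \<noteq> (j::4)"
    by (metis (full_types) num1_eq_iff zero_neq_one)
  have P: "\<And>a b z. a \<noteq> b \<Longrightarrow> (z,a,b) \<in> plaquettes" by (simp add: plaquettes_def)
  let ?e = "(x, x + unitv j)"
  have m: "\<And>z a b. bd (z,a,b) = {(z, z+unitv a), (z+unitv a, z+unitv a+unitv b),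
      (z+unitv a+unitv b, z+unitv b), (z+unitv b, z)}" by (simp add: bd_def)
  { fix k assume kj: "k \<noteq> j"
    have "(x - unitv j, x - unitv j + unitv k) \<in> bdS (cobdS (bdS (cobd ?e)))"
      apply (rule Hmem[of "(x,j,k)" _ "(x + unitv k, x)" "(x - unitv j, k, j)"])
      using kj by (auto simp: P m algebra_simps)
    hence a1: "x - unitv j \<in> box N" using H edges_box by fastforce
    have "(x + unitv j + unitv k + unitv j, x + unitv j + unitv j) \<in> bdS (cobdS (bdS (cobd ?e)))"
      apply (rule Hmem[of "(x,j,k)" _ "(x + unitv j, x + unitv j + unitv k)" "(x + unitv j, k, j)"])
      using kj by (auto simp: P m algebra_simps)
    hence a2: "x + unitv j + unitv j \<in> box N" using H edges_box by fastforce
    have "(x + unitv k, x) \<in> bdS (cobdS (bdS (cobd ?e)))"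
      apply (rule Hmem[of "(x,j,k)" _ "?e" "(x, j, k)"])
      using kj by (auto simp: P m algebra_simps)
    hence a3: "x + unitv k \<in> box N" using H edges_box by fastforce
    have "(x - unitv k, x) \<in> bdS (cobdS (bdS (cobd ?e)))"
      apply (rule Hmem[of "(x - unitv k,k,j)" _ "?e" "(x - unitv k,k,j)"])
      using kj by (auto simp: P m algebra_simps)
    hence a4: "x - unitv k \<in> box N" using H edges_box by fastforce
    have "- int N \<le> x$j - 1" "x$j + 2 \<le> int N" "- int N \<le> x$k - 1" "x$k + 1 \<le> int N"
      using box_abs[OF a1, of j] box_abs[OF a2, of j] box_abs[OF a3, of k] box_abs[OF a4, of k] kj
      by auto
  } note * = this
  show ?thesis unfolding inb_def using *[OF kj] * by auto
qed


definition Mv :: "vertex \<Rightarrow> edge \<Rightarrow> vertex" where "Mv x f = fst f + snd f - (x + x)"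
definition cls0 :: "4 \<Rightarrow> vertex \<Rightarrow> bool" where
  "cls0 j m \<longleftrightarrow> m$j \<in> {0..2} \<and> (\<forall>i. i \<noteq> j \<longrightarrow> m$i = 0)"
definition clsK :: "4 \<Rightarrow> 4 \<Rightarrow> int \<Rightarrow> vertex \<Rightarrow> bool" where
  "clsK j k s m \<longleftrightarrow> m$j \<in> {0..2} \<and> sgn (m$k) = s \<and> (\<forall>i. i \<noteq> j \<and> i \<noteq> k \<longrightarrow> m$i = 0)"
definition cls8 :: "4 \<Rightarrow> vertex \<Rightarrow> bool" where
  "cls8 j m \<longleftrightarrow> m$j \<notin> {0..2} \<or> (\<exists>a b. a \<noteq> b \<and> a \<noteq> j \<and> b \<noteq> j \<and> m$a \<noteq> 0 \<and> m$b \<noteq> 0)"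

lemma flat_range: "\<sigma> \<in> flat_configs N n \<Longrightarrow> f \<in> edges N \<Longrightarrow> 0 \<le> \<sigma> f \<and> \<sigma> f < n"
  by (auto simp: flat_configs_def)

context
  fixes N :: nat and n :: int and \<sigma> x j
  assumes fl: "\<sigma> \<in> flat_configs N n"
    and ib: "inb N x j"
    and nd: "\<not> n dvd \<sigma> (x, x + unitv j)"
begin

lemma grp_plus:
  assumes kj: "k \<noteq> j"
  shows "\<exists>f. f \<in> pos_edges N \<and> \<sigma> f \<noteq> 0 \<and> clsK j k 1 (Mv x f)"
proof -
  have b: "x \<in> box N" "x + unitv j \<in> box N" "x + unitv k \<in> box N" "x + unitv j + unitv k \<in> box N"
          "x + unitv k + unitv j \<in> box N"
    using kj by (auto intro!: in_box[OF ib])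
  have q: "n dvd (\<sigma> (x, x+unitv j) + \<sigma> (x+unitv j, x+unitv j+unitv k)
           - \<sigma> (x+unitv k, x+unitv k+unitv j) - \<sigma> (x, x+unitv k))"
    using plaq[OF fl _ b(1-4)] kj by auto
  have "\<sigma> (x+unitv j, x+unitv j+unitv k) \<noteq> 0 \<or> \<sigma> (x+unitv k, x+unitv k+unitv j) \<noteq> 0 \<or> \<sigma> (x, x+unitv k) \<noteq> 0"
    using q nd by auto
  moreover have "clsK j k 1 (Mv x (x+unitv j, x+unitv j+unitv k))"
     "clsK j k 1 (Mv x (x+unitv k, x+unitv k+unitv j))" "clsK j k 1 (Mv x (x, x+unitv k))"
    using kj by (auto simp: clsK_def Mv_def)
  moreover have "(x+unitv j, x+unitv j+unitv k) \<in> pos_edges N"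
     "(x+unitv k, x+unitv k+unitv j) \<in> pos_edges N" "(x, x+unitv k) \<in> pos_edges N"
    using b by (auto intro: pedge_in)
  ultimately show ?thesis by blast
qed

lemma grp_minus:
  assumes kj: "k \<noteq> j"
  shows "\<exists>f. f \<in> pos_edges N \<and> \<sigma> f \<noteq> 0 \<and> clsK j k (-1) (Mv x f)"
proof -
  have b: "x - unitv k \<in> box N" "x - unitv k + unitv k \<in> box N" "x - unitv k + unitv j \<in> box N"
     "x - unitv k + unitv k + unitv j \<in> box N" "x - unitv k + unitv j + unitv k \<in> box N"
    using kj by (auto intro!: in_box[OF ib])
  have q: "n dvd (\<sigma> (x - unitv k, x - unitv k+unitv k) + \<sigma> (x - unitv k+unitv k, x - unitv k+unitv k+unitv j)
           - \<sigma> (x - unitv k+unitv j, x - unitv k+unitv j+unitv k) - \<sigma> (x - unitv k, x - unitv k+unitv j))"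
    using plaq[OF fl _ b(1-4)] kj by auto
  have eq: "\<sigma> (x - unitv k+unitv k, x - unitv k+unitv k+unitv j) = \<sigma> (x, x + unitv j)" by simp
  have "\<sigma> (x - unitv k, x - unitv k+unitv k) \<noteq> 0 \<or> \<sigma> (x - unitv k+unitv j, x - unitv k+unitv j+unitv k) \<noteq> 0
      \<or> \<sigma> (x - unitv k, x - unitv k+unitv j) \<noteq> 0"
    using q nd unfolding eq by auto
  moreover have "clsK j k (-1) (Mv x (x - unitv k, x - unitv k+unitv k))"
     "clsK j k (-1) (Mv x (x - unitv k+unitv j, x - unitv k+unitv j+unitv k))"
     "clsK j k (-1) (Mv x (x - unitv k, x - unitv k+unitv j))"
    using kj by (auto simp: clsK_def Mv_def)
  moreover have "(x - unitv k, x - unitv k+unitv k) \<in> pos_edges N"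
    by (rule pedge_in[OF b(1) b(2)])
  moreover have "(x - unitv k+unitv j, x - unitv k+unitv j+unitv k) \<in> pos_edges N"
    by (rule pedge_in[OF b(3) b(5)])
  moreover have "(x - unitv k, x - unitv k+unitv j) \<in> pos_edges N"
    by (rule pedge_in[OF b(1) b(3)])
  ultimately show ?thesis by blast
qed

lemma grp8:
  assumes kj: "k \<noteq> j" and lj: "l \<noteq> j" and kl: "k \<noteq> l"
  shows "\<exists>f. f \<in> pos_edges N \<and> \<sigma> f \<noteq> 0 \<and> cls8 j (Mv x f)"
proof -
  let ?j = "unitv j" and ?k = "unitv k" and ?l = "unitv l"
  have B: "\<And>y. (y - x)$j \<in> {-1..2} \<Longrightarrow> (\<forall>i. i \<noteq> j \<longrightarrow> (y - x)$i \<in> {-1..1}) \<Longrightarrow> y \<in> box N"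
    using in_box[OF ib] by blast
  have q1: "n dvd (\<sigma> (x-?j, x-?j+?j) + \<sigma> (x-?j+?j, x-?j+?j+?k) - \<sigma> (x-?j+?k, x-?j+?k+?j) - \<sigma> (x-?j, x-?j+?k))"
    by (rule plaq[OF fl]) (use kj kl lj in \<open>auto intro!: B\<close>)
  have q2: "n dvd (\<sigma> (x+?k, x+?k+?j) + \<sigma> (x+?k+?j, x+?k+?j+?l) - \<sigma> (x+?k+?l, x+?k+?l+?j) - \<sigma> (x+?k, x+?k+?l))"
    by (rule plaq[OF fl]) (use kj kl lj in \<open>auto intro!: B\<close>)
  have q3: "n dvd (\<sigma> (x+?j+?k, x+?j+?k+?j) + \<sigma> (x+?j+?k+?j, x+?j+?k+?j+?l) - \<sigma> (x+?j+?k+?l, x+?j+?k+?l+?j) - \<sigma> (x+?j+?k, x+?j+?k+?l))"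
    by (rule plaq[OF fl]) (use kj kl lj in \<open>auto intro!: B\<close>)
  have q4: "n dvd (\<sigma> (x+?j, x+?j+?j) + \<sigma> (x+?j+?j, x+?j+?j+?k) - \<sigma> (x+?j+?k, x+?j+?k+?j) - \<sigma> (x+?j, x+?j+?k))"
    by (rule plaq[OF fl]) (use kj kl lj in \<open>auto intro!: B\<close>)
  have q5: "n dvd (\<sigma> (x, x+?j) + \<sigma> (x+?j, x+?j+?k) - \<sigma> (x+?k, x+?k+?j) - \<sigma> (x, x+?k))"
    by (rule plaq[OF fl]) (use kj kl lj in \<open>auto intro!: B\<close>)
  have e1: "\<sigma> (x-?j+?j, x-?j+?j+?k) = \<sigma> (x, x+?k)" by simp
  have e2: "\<sigma> (x+?k+?j, x+?k+?j+?l) = \<sigma> (x+?j+?k, x+?j+?k+?l)" by (simp add: add_ac)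
  let ?A = "[(x-?j, x-?j+?j), (x-?j, x-?j+?k), (x-?j+?k, x-?j+?k+?j), (x+?k, x+?k+?l),
     (x+?k+?l, x+?k+?l+?j), (x+?j+?k+?l, x+?j+?k+?l+?j), (x+?j+?k+?j, x+?j+?k+?j+?l),
     (x+?j+?j, x+?j+?j+?k), (x+?j, x+?j+?j)]"
  have "\<exists>f\<in>set ?A. \<sigma> f \<noteq> 0"
  proof (rule ccontr)
    assume "\<not> ?thesis"
    hence z: "\<forall>f\<in>set ?A. \<sigma> f = 0" by blast
    have "n dvd ((\<sigma> (x-?j, x-?j+?j) + \<sigma> (x-?j+?j, x-?j+?j+?k) - \<sigma> (x-?j+?k, x-?j+?k+?j) - \<sigma> (x-?j, x-?j+?k))
       + (\<sigma> (x+?k, x+?k+?j) + \<sigma> (x+?k+?j, x+?k+?j+?l) - \<sigma> (x+?k+?l, x+?k+?l+?j) - \<sigma> (x+?k, x+?k+?l))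
       + (\<sigma> (x+?j+?k, x+?j+?k+?j) + \<sigma> (x+?j+?k+?j, x+?j+?k+?j+?l) - \<sigma> (x+?j+?k+?l, x+?j+?k+?l+?j) - \<sigma> (x+?j+?k, x+?j+?k+?l))
       + (\<sigma> (x+?j, x+?j+?j) + \<sigma> (x+?j+?j, x+?j+?j+?k) - \<sigma> (x+?j+?k, x+?j+?k+?j) - \<sigma> (x+?j, x+?j+?k))
       + (\<sigma> (x, x+?j) + \<sigma> (x+?j, x+?j+?k) - \<sigma> (x+?k, x+?k+?j) - \<sigma> (x, x+?k)))"
      using q1 q2 q3 q4 q5 by (intro dvd_add)
    hence "n dvd \<sigma> (x, x+?j)" unfolding e1 e2 using z by simp
    thus False using nd by simp
  qed
  moreover have "\<forall>f\<in>set ?A. f \<in> pos_edges N"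
    apply (simp only: list.set ball_simps)
    apply (intro conjI TrueI; rule pedge_in; rule B)
    using kj kl lj by auto
  moreover have "\<forall>f\<in>set ?A. cls8 j (Mv x f)"
  proof -
    have c2: "\<And>m. m$k \<noteq> 0 \<Longrightarrow> m$l \<noteq> 0 \<Longrightarrow> cls8 j m" unfolding cls8_def using kj lj kl by blast
    show ?thesis using kj kl lj
      by (auto simp: Mv_def cls8_def[of j] intro!: c2)
  qed
  ultimately show ?thesis by blast
qed

end


lemma cls_disj:
  "cls0 j m \<Longrightarrow> clsK j k s m \<Longrightarrow> k \<noteq> j \<Longrightarrow> s \<noteq> 0 \<Longrightarrow> False"
  "clsK j k s m \<Longrightarrow> clsK j k' s' m \<Longrightarrow> s \<noteq> 0 \<Longrightarrow> s' \<noteq> 0 \<Longrightarrow> k \<noteq> j \<Longrightarrow> k' \<noteq> j \<Longrightarrow> k = k' \<and> s = s'"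
  "cls8 j m \<Longrightarrow> cls0 j m \<Longrightarrow> False"
  "cls8 j m \<Longrightarrow> clsK j k s m \<Longrightarrow> False"
  unfolding cls0_def clsK_def cls8_def
     apply (metis sgn_0)
    apply (metis sgn_0)
   apply blast
  apply blast
  done

definition cl :: "4 \<Rightarrow> (4 \<times> int) option option \<Rightarrow> vertex \<Rightarrow> bool" where
  "cl j L = (case L of None \<Rightarrow> cls0 j | Some None \<Rightarrow> cls8 j | Some (Some (k,s)) \<Rightarrow> clsK j k s)"

lemma cl_unique:
  assumes "L1 \<in> insert None (insert (Some None) (Some ` Some ` ((UNIV - {j}) \<times> {1, -1::int})))"
    and "L2 \<in> insert None (insert (Some None) (Some ` Some ` ((UNIV - {j}) \<times> {1, -1::int})))"
    and c1: "cl j L1 m" and c2: "cl j L2 m"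
  shows "L1 = L2"
proof -
  have F: "\<And>L. L \<in> insert None (insert (Some None) (Some ` Some ` ((UNIV - {j}) \<times> {1, -1::int}))) \<Longrightarrow>
     L = None \<or> L = Some None \<or> (\<exists>k s. L = Some (Some (k,s)) \<and> k \<noteq> j \<and> s \<noteq> 0)" by auto
  from F[OF assms(1)] F[OF assms(2)] c1 c2 show ?thesis
    unfolding cl_def using cls_disj by (elim disjE exE conjE; simp; metis)
qed

lemma lower8:
  assumes n2: "n \<ge> 2" and fl: "\<sigma> \<in> flat_configs N n"
    and e: "(x, x + unitv j) \<in> pos_edges N"
    and H: "bdS (cobdS (bdS (cobd (x, x + unitv j)))) \<subseteq> edges N"
    and ne: "\<sigma> (x, x + unitv j) \<noteq> 0"
  shows "8 \<le> card {f \<in> pos_edges N. \<sigma> f \<noteq> 0}"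
proof -
  let ?S = "{f \<in> pos_edges N. \<sigma> f \<noteq> 0}"
  have ib: "inb N x j" using hyp_inb[OF H] .
  have "0 \<le> \<sigma> (x, x + unitv j) \<and> \<sigma> (x, x + unitv j) < n"
    using flat_range[OF fl] e pos_sub by blast
  hence nd: "\<not> n dvd \<sigma> (x, x + unitv j)" using ne by (auto dest: zdvd_imp_le)
  obtain k where kj: "k \<noteq> j" by (metis (full_types) num1_eq_iff zero_neq_one)
  have "card (UNIV - {j,k} :: 4 set) = 2" using kj by (simp add: card_Diff_subset)
  then obtain l where l: "l \<in> UNIV - {j,k}" by (metis card.empty ex_in_conv zero_neq_numeral)
  hence lj: "l \<noteq> j" and kl: "k \<noteq> l" by auto
  let ?L = "insert None (insert (Some None) (Some ` Some ` ((UNIV - {j}) \<times> {1, -1::int})))"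
  define ch where "ch = (\<lambda>L. if L = None then (x, x + unitv j) else SOME f. f \<in> ?S \<and> cl j L (Mv x f))"
  have chp: "ch L \<in> ?S \<and> cl j L (Mv x (ch L))" if LL: "L \<in> ?L" for L
  proof -
    consider "L = None" | "L = Some None" | k' s where "L = Some (Some (k',s))" "k' \<noteq> j" "s = 1 \<or> s = -1"
      using LL by blast
    thus ?thesis
    proof cases
      case 1 thus ?thesis using e ne by (simp add: ch_def cl_def cls0_def Mv_def)
    next
      case 2
      have "\<exists>f. f \<in> ?S \<and> cl j L (Mv x f)" using grp8[OF fl ib nd kj lj kl] 2 by (simp add: cl_def)
      hence "(SOME f. f \<in> ?S \<and> cl j L (Mv x f)) \<in> ?S \<and> cl j L (Mv x (SOME f. f \<in> ?S \<and> cl j L (Mv x f)))"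
        by (rule someI_ex)
      thus ?thesis unfolding ch_def using 2 by simp
    next
      case 3
      have "\<exists>f. f \<in> ?S \<and> cl j L (Mv x f)"
        using grp_plus[OF fl ib nd 3(2)] grp_minus[OF fl ib nd 3(2)] 3 by (auto simp: cl_def)
      hence "(SOME f. f \<in> ?S \<and> cl j L (Mv x f)) \<in> ?S \<and> cl j L (Mv x (SOME f. f \<in> ?S \<and> cl j L (Mv x f)))"
        by (rule someI_ex)
      thus ?thesis unfolding ch_def using 3 by simp
    qed
  qed
  have inj: "inj_on ch ?L"
  proof (rule inj_onI)
    fix L1 L2 assume a: "L1 \<in> ?L" "L2 \<in> ?L" "ch L1 = ch L2"
    have c1: "cl j L1 (Mv x (ch L1))" using chp[OF a(1)] by (rule conjunct2)
    have c2: "cl j L2 (Mv x (ch L1))" using chp[OF a(2)] a(3) by simp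
    show "L1 = L2" using cl_unique[OF a(1,2) c1 c2] .
  qed
  have "card ?L = 8"
  proof -
    have "card ((UNIV - {j}) \<times> {1, -1::int}) = 6" by (simp add: card_cartesian_product card_Diff_subset)
    moreover have "card ((\<lambda>p. Some (Some p)) ` ((UNIV - {j}) \<times> {1, -1::int})) = card ((UNIV - {j}) \<times> {1, -1::int})"
      by (rule card_image) (simp add: inj_on_def)
    ultimately have "card (Some ` Some ` ((UNIV - {j}) \<times> {1, -1::int})) = 6"
      by (simp add: image_image)
    moreover have "finite (Some ` Some ` ((UNIV - {j}) \<times> {1, -1::int}))" by simp
    moreover have "Some None \<notin> Some ` Some ` ((UNIV - {j}) \<times> {1, -1::int})" by auto
    moreover have "None \<notin> insert (Some None) (Some ` Some ` ((UNIV - {j}) \<times> {1, -1::int}))" by auto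
    ultimately show ?thesis by (simp add: card_insert_if del: insert_iff)
  qed
  moreover have "card (ch ` ?L) = card ?L" using inj by (rule card_image)
  moreover have "ch ` ?L \<subseteq> ?S"
  proof (rule image_subsetI)
    fix L assume "L \<in> ?L" from chp[OF this] show "ch L \<in> ?S" by (rule conjunct1)
  qed
  moreover have "finite ?S" using finite_pos by simp
  ultimately show ?thesis using card_mono[of ?S "ch ` ?L"] by linarith
qed


definition pr :: "edge set \<Rightarrow> edge set" where "pr S = {f. f \<in> S \<or> rev_edge f \<in> S}"

definition adj :: "nat \<Rightarrow> edge \<Rightarrow> edge \<Rightarrow> bool" where
  "adj N f g \<longleftrightarrow> f \<noteq> g \<and> (\<exists>p\<in>plaquettes. bd p \<subseteq> edges N \<and> f \<in> pr (bd p) \<and> g \<in> pr (bd p))"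

lemma adj_sym: "adj N f g \<Longrightarrow> adj N g f" unfolding adj_def by blast

definition dir :: "edge \<Rightarrow> 4" where "dir f = (SOME d. snd f = fst f + unitv d)"

lemma dir_eq[simp]: "dir (u, u + unitv d) = d"
  unfolding dir_def by (rule some_equality) auto

lemma dir_eq2[simp]: "dir (z + unitv a, z + (unitv a + unitv b)) = b"
proof -
  have eq: "z + (unitv a + unitv b) = (z + unitv a) + unitv b" by (simp add: algebra_simps)
  show ?thesis unfolding eq by (rule dir_eq)
qed
lemma dir_eq3[simp]: "dir (z + unitv b, z + (unitv a + unitv b)) = a"
proof -
  have eq: "z + (unitv a + unitv b) = (z + unitv b) + unitv a" by (simp add: algebra_simps)
  show ?thesis unfolding eq by (rule dir_eq)
qed

definition Lab :: "edge \<Rightarrow> (4 \<times> nat \<times> nat) set" where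
  "Lab f = (UNIV - {dir f}) \<times> {0,1} \<times> {0,1,2}"

lemma card_Lab: "card (Lab f) = 18"
  by (simp add: Lab_def card_cartesian_product card_Diff_subset)

lemma finite_Lab: "finite (Lab f)" by (simp add: Lab_def)

definition nbr :: "edge \<Rightarrow> 4 \<times> nat \<times> nat \<Rightarrow> edge" where
  "nbr f l = (case l of (c, s, t) \<Rightarrow>
     (let u = fst f; d = dir f; z = (if s = 0 then u else u - unitv c) in
      if t = 0 then (if s = 0 then (u + unitv c, u + unitv c + unitv d) else (u - unitv c, u - unitv c + unitv d))
      else if t = 1 then (z, z + unitv c) else (z + unitv d, z + unitv d + unitv c)))"

lemma no_back: "y = x + unitv a \<Longrightarrow> x = y + unitv b \<Longrightarrow> False"
proof -
  assume "y = x + unitv a" "x = y + unitv b"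
  hence "x = x + (unitv a + unitv b)" by (simp add: algebra_simps)
  hence "unitv a + unitv b = (0::vertex)" by (metis add_cancel_left_right)
  thus False using unitv_sum_ne0 by blast
qed

lemma posrep:
  assumes ab: "a \<noteq> b" and h: "h = (u, u + unitv d)" and m: "h \<in> pr (bd (z,a,b))"
  shows "h = (z, z+unitv a) \<or> h = (z+unitv a, z+unitv a+unitv b) \<or> h = (z+unitv b, z+unitv b+unitv a) \<or> h = (z, z+unitv b)"
proof -
  have c: "z + unitv b + unitv a = z + unitv a + unitv b" by (simp add: algebra_simps)
  show ?thesis using m h unfolding pr_def bd_def rev_edge_def
    by (auto simp: c unitv_sum_ne0 dest: no_back)
qed

lemma nb1: "a \<noteq> b \<Longrightarrow> \<exists>l\<in>Lab (z, z+unitv a). (z+unitv a, z+unitv a+unitv b) = nbr (z, z+unitv a) l"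
  by (rule bexI[where x="(b,0,2)"]) (auto simp: Lab_def nbr_def algebra_simps)
lemma nb2: "a \<noteq> b \<Longrightarrow> \<exists>l\<in>Lab (z, z+unitv a). (z+unitv b, z+unitv b+unitv a) = nbr (z, z+unitv a) l"
  by (rule bexI[where x="(b,0,0)"]) (auto simp: Lab_def nbr_def algebra_simps)
lemma nb3: "a \<noteq> b \<Longrightarrow> \<exists>l\<in>Lab (z, z+unitv a). (z, z+unitv b) = nbr (z, z+unitv a) l"
  by (rule bexI[where x="(b,0,1)"]) (auto simp: Lab_def nbr_def algebra_simps)
lemma nb4: "a \<noteq> b \<Longrightarrow> \<exists>l\<in>Lab (z+unitv a, z+unitv a+unitv b). (z, z+unitv a) = nbr (z+unitv a, z+unitv a+unitv b) l"
  by (rule bexI[where x="(a,1,1)"]) (auto simp: Lab_def nbr_def algebra_simps)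
lemma nb5: "a \<noteq> b \<Longrightarrow> \<exists>l\<in>Lab (z+unitv a, z+unitv a+unitv b). (z+unitv b, z+unitv b+unitv a) = nbr (z+unitv a, z+unitv a+unitv b) l"
  by (rule bexI[where x="(a,1,2)"]) (auto simp: Lab_def nbr_def algebra_simps)
lemma nb6: "a \<noteq> b \<Longrightarrow> \<exists>l\<in>Lab (z+unitv a, z+unitv a+unitv b). (z, z+unitv b) = nbr (z+unitv a, z+unitv a+unitv b) l"
  by (rule bexI[where x="(a,1,0)"]) (auto simp: Lab_def nbr_def algebra_simps)
lemma nb7: "a \<noteq> b \<Longrightarrow> \<exists>l\<in>Lab (z+unitv b, z+unitv b+unitv a). (z, z+unitv a) = nbr (z+unitv b, z+unitv b+unitv a) l"
  by (rule bexI[where x="(b,1,0)"]) (auto simp: Lab_def nbr_def algebra_simps)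
lemma nb8: "a \<noteq> b \<Longrightarrow> \<exists>l\<in>Lab (z+unitv b, z+unitv b+unitv a). (z+unitv a, z+unitv a+unitv b) = nbr (z+unitv b, z+unitv b+unitv a) l"
  by (rule bexI[where x="(b,1,2)"]) (auto simp: Lab_def nbr_def algebra_simps)
lemma nb9: "a \<noteq> b \<Longrightarrow> \<exists>l\<in>Lab (z+unitv b, z+unitv b+unitv a). (z, z+unitv b) = nbr (z+unitv b, z+unitv b+unitv a) l"
  by (rule bexI[where x="(b,1,1)"]) (auto simp: Lab_def nbr_def algebra_simps)
lemma nb10: "a \<noteq> b \<Longrightarrow> \<exists>l\<in>Lab (z, z+unitv b). (z, z+unitv a) = nbr (z, z+unitv b) l"
  by (rule bexI[where x="(a,0,1)"]) (auto simp: Lab_def nbr_def algebra_simps)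
lemma nb11: "a \<noteq> b \<Longrightarrow> \<exists>l\<in>Lab (z, z+unitv b). (z+unitv a, z+unitv a+unitv b) = nbr (z, z+unitv b) l"
  by (rule bexI[where x="(a,0,0)"]) (auto simp: Lab_def nbr_def algebra_simps)
lemma nb12: "a \<noteq> b \<Longrightarrow> \<exists>l\<in>Lab (z, z+unitv b). (z+unitv b, z+unitv b+unitv a) = nbr (z, z+unitv b) l"
  by (rule bexI[where x="(a,0,2)"]) (auto simp: Lab_def nbr_def algebra_simps)

lemma nbr_ok:
  assumes f: "f \<in> pos_edges N" and g: "g \<in> pos_edges N" and a: "adj N f g"
  shows "\<exists>l\<in>Lab f. g = nbr f l"
proof -
  obtain z a b where p: "a \<noteq> b" "f \<in> pr (bd (z,a,b))" "g \<in> pr (bd (z,a,b))" and fg: "f \<noteq> g"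
    using a unfolding adj_def plaquettes_def by auto
  obtain u d where fu: "f = (u, u + unitv d)" using f by (auto simp: pos_edges_def)
  obtain v d' where gv: "g = (v, v + unitv d')" using g by (auto simp: pos_edges_def)
  have F: "f = (z, z+unitv a) \<or> f = (z+unitv a, z+unitv a+unitv b) \<or> f = (z+unitv b, z+unitv b+unitv a) \<or> f = (z, z+unitv b)"
    by (rule posrep[OF p(1) fu p(2)])
  have G: "g = (z, z+unitv a) \<or> g = (z+unitv a, z+unitv a+unitv b) \<or> g = (z+unitv b, z+unitv b+unitv a) \<or> g = (z, z+unitv b)"
    by (rule posrep[OF p(1) gv p(3)])
  note nbs = nb1[OF p(1)] nb2[OF p(1)] nb3[OF p(1)] nb4[OF p(1)] nb5[OF p(1)] nb6[OF p(1)]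
    nb7[OF p(1)] nb8[OF p(1)] nb9[OF p(1)] nb10[OF p(1)] nb11[OF p(1)] nb12[OF p(1)]
  show ?thesis
  proof -
    have c1: "f = (z, z+unitv a) \<Longrightarrow> g = (z, z+unitv a) \<Longrightarrow> ?thesis" using fg by simp
    have c2: "f = (z, z+unitv a) \<Longrightarrow> g = (z+unitv a, z+unitv a+unitv b) \<Longrightarrow> ?thesis" by (simp only:) (rule nb1[OF p(1)])
    have c3: "f = (z, z+unitv a) \<Longrightarrow> g = (z+unitv b, z+unitv b+unitv a) \<Longrightarrow> ?thesis" by (simp only:) (rule nb2[OF p(1)])
    have c4: "f = (z, z+unitv a) \<Longrightarrow> g = (z, z+unitv b) \<Longrightarrow> ?thesis" by (simp only:) (rule nb3[OF p(1)])
    have c5: "f = (z+unitv a, z+unitv a+unitv b) \<Longrightarrow> g = (z, z+unitv a) \<Longrightarrow> ?thesis" by (simp only:) (rule nb4[OF p(1)])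
    have c6: "f = (z+unitv a, z+unitv a+unitv b) \<Longrightarrow> g = (z+unitv a, z+unitv a+unitv b) \<Longrightarrow> ?thesis" using fg by simp
    have c7: "f = (z+unitv a, z+unitv a+unitv b) \<Longrightarrow> g = (z+unitv b, z+unitv b+unitv a) \<Longrightarrow> ?thesis" by (simp only:) (rule nb5[OF p(1)])
    have c8: "f = (z+unitv a, z+unitv a+unitv b) \<Longrightarrow> g = (z, z+unitv b) \<Longrightarrow> ?thesis" by (simp only:) (rule nb6[OF p(1)])
    have c9: "f = (z+unitv b, z+unitv b+unitv a) \<Longrightarrow> g = (z, z+unitv a) \<Longrightarrow> ?thesis" by (simp only:) (rule nb7[OF p(1)])
    have c10: "f = (z+unitv b, z+unitv b+unitv a) \<Longrightarrow> g = (z+unitv a, z+unitv a+unitv b) \<Longrightarrow> ?thesis" by (simp only:) (rule nb8[OF p(1)])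
    have c11: "f = (z+unitv b, z+unitv b+unitv a) \<Longrightarrow> g = (z+unitv b, z+unitv b+unitv a) \<Longrightarrow> ?thesis" using fg by simp
    have c12: "f = (z+unitv b, z+unitv b+unitv a) \<Longrightarrow> g = (z, z+unitv b) \<Longrightarrow> ?thesis" by (simp only:) (rule nb9[OF p(1)])
    have c13: "f = (z, z+unitv b) \<Longrightarrow> g = (z, z+unitv a) \<Longrightarrow> ?thesis" by (simp only:) (rule nb10[OF p(1)])
    have c14: "f = (z, z+unitv b) \<Longrightarrow> g = (z+unitv a, z+unitv a+unitv b) \<Longrightarrow> ?thesis" by (simp only:) (rule nb11[OF p(1)])
    have c15: "f = (z, z+unitv b) \<Longrightarrow> g = (z+unitv b, z+unitv b+unitv a) \<Longrightarrow> ?thesis" by (simp only:) (rule nb12[OF p(1)])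
    have c16: "f = (z, z+unitv b) \<Longrightarrow> g = (z, z+unitv b) \<Longrightarrow> ?thesis" using fg by simp
    from F show ?thesis
    proof (elim disjE)
      assume hf: "f = (z, z+unitv a)"
      from G show ?thesis
      proof (elim disjE)
        assume hg: "g = (z, z+unitv a)"
        show ?thesis by (rule c1[OF hf hg])
      next
        assume hg: "g = (z+unitv a, z+unitv a+unitv b)"
        show ?thesis by (rule c2[OF hf hg])
      next
        assume hg: "g = (z+unitv b, z+unitv b+unitv a)"
        show ?thesis by (rule c3[OF hf hg])
      next
        assume hg: "g = (z, z+unitv b)"
        show ?thesis by (rule c4[OF hf hg])
      qed
    next
      assume hf: "f = (z+unitv a, z+unitv a+unitv b)"
      from G show ?thesis
      proof (elim disjE)
        assume hg: "g = (z, z+unitv a)"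
        show ?thesis by (rule c5[OF hf hg])
      next
        assume hg: "g = (z+unitv a, z+unitv a+unitv b)"
        show ?thesis by (rule c6[OF hf hg])
      next
        assume hg: "g = (z+unitv b, z+unitv b+unitv a)"
        show ?thesis by (rule c7[OF hf hg])
      next
        assume hg: "g = (z, z+unitv b)"
        show ?thesis by (rule c8[OF hf hg])
      qed
    next
      assume hf: "f = (z+unitv b, z+unitv b+unitv a)"
      from G show ?thesis
      proof (elim disjE)
        assume hg: "g = (z, z+unitv a)"
        show ?thesis by (rule c9[OF hf hg])
      next
        assume hg: "g = (z+unitv a, z+unitv a+unitv b)"
        show ?thesis by (rule c10[OF hf hg])
      next
        assume hg: "g = (z+unitv b, z+unitv b+unitv a)"
        show ?thesis by (rule c11[OF hf hg])
      next
        assume hg: "g = (z, z+unitv b)"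
        show ?thesis by (rule c12[OF hf hg])
      qed
    next
      assume hf: "f = (z, z+unitv b)"
      from G show ?thesis
      proof (elim disjE)
        assume hg: "g = (z, z+unitv a)"
        show ?thesis by (rule c13[OF hf hg])
      next
        assume hg: "g = (z+unitv a, z+unitv a+unitv b)"
        show ?thesis by (rule c14[OF hf hg])
      next
        assume hg: "g = (z+unitv b, z+unitv b+unitv a)"
        show ?thesis by (rule c15[OF hf hg])
      next
        assume hg: "g = (z, z+unitv b)"
        show ?thesis by (rule c16[OF hf hg])
      qed
    qed
  qed
qed


definition W :: "nat \<Rightarrow> edge \<Rightarrow> nat \<Rightarrow> edge list set" where
  "W N e L = {w. length w = L \<and> hd w = e \<and> set w \<subseteq> pos_edges N \<and> successively (adj N) w}"

lemma W_step: "W N e (Suc (Suc m)) \<subseteq> (\<lambda>(w,l). w @ [nbr (last w) l]) ` Sigma (W N e (Suc m)) (\<lambda>w. Lab (last w))"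
proof
  fix v assume v: "v \<in> W N e (Suc (Suc m))"
  define w where "w = butlast v"
  define g where "g = last v"
  have vne: "v \<noteq> []" using v by (auto simp: W_def)
  have vw: "v = w @ [g]" using vne by (simp add: w_def g_def)
  have wl: "length w = Suc m" using v by (simp add: W_def w_def)
  hence wne: "w \<noteq> []" by auto
  have hw: "hd w = e" using v vw wne by (auto simp: W_def)
  have sv: "set v \<subseteq> pos_edges N" using v by (auto simp: W_def)
  hence sw: "set w \<subseteq> pos_edges N" and gp: "g \<in> pos_edges N" using vw by auto
  have "successively (adj N) (w @ [g])" using v vw by (simp add: W_def)
  hence suw: "successively (adj N) w" and ad: "adj N (last w) g"
    using wne by (auto simp: successively_append_iff)
  have lp: "last w \<in> pos_edges N" using sw wne by auto
  obtain l where l: "l \<in> Lab (last w)" "g = nbr (last w) l" using nbr_ok[OF lp gp ad] by blast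
  have "w \<in> W N e (Suc m)" using wl hw sw suw by (simp add: W_def)
  thus "v \<in> (\<lambda>(w,l). w @ [nbr (last w) l]) ` Sigma (W N e (Suc m)) (\<lambda>w. Lab (last w))"
    using l vw by force
qed

lemma W_bound: "finite (W N e (Suc m)) \<and> card (W N e (Suc m)) \<le> 18^m"
proof (induction m)
  case 0
  have "W N e (Suc 0) \<subseteq> {[e]}"
  proof
    fix w assume "w \<in> W N e (Suc 0)"
    thus "w \<in> {[e]}" by (cases w) (auto simp: W_def)
  qed
  hence f: "finite (W N e (Suc 0))" by (rule finite_subset) simp
  have "card (W N e (Suc 0)) \<le> card {[e]}" using card_mono[of "{[e]}" "W N e (Suc 0)"] \<open>W N e (Suc 0) \<subseteq> {[e]}\<close> by simp
  thus ?case using f by simp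
next
  case (Suc m)
  let ?S = "Sigma (W N e (Suc m)) (\<lambda>w. Lab (last w))"
  have fS: "finite ?S" using Suc.IH finite_Lab by auto
  have cS: "card ?S = 18 * card (W N e (Suc m))"
    using Suc.IH finite_Lab by (simp add: card_SigmaI card_Lab)
  have "finite (W N e (Suc (Suc m)))" by (rule finite_subset[OF W_step finite_imageI[OF fS]])
  moreover have "card (W N e (Suc (Suc m))) \<le> card ?S"
    using card_mono[OF finite_imageI[OF fS] W_step] card_image_le[OF fS] by (rule order_trans)
  ultimately show ?case using cS Suc.IH by simp
qed


lemma splice:
  assumes "successively P (xs @ ys)" "xs \<noteq> []" "last xs = a" "P a b" "P b a"
  shows "successively P (xs @ b # a # ys)"
proof -
  have s1: "successively P xs" and s2: "successively P ys" and j: "ys \<noteq> [] \<Longrightarrow> P a (hd ys)"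
    using assms(1-3) by (auto simp: successively_append_iff)
  have "successively P (a # ys)"
    using s2 j by (cases ys) auto
  hence "successively P (b # a # ys)" using assms(5) by simp
  thus ?thesis using s1 assms(2-4) by (auto simp: successively_append_iff)
qed

definition Rel :: "nat \<Rightarrow> edge set \<Rightarrow> (edge \<times> edge) set" where
  "Rel N S = {(a,b). a \<in> S \<and> b \<in> S \<and> adj N a b}"

definition cmpnt :: "nat \<Rightarrow> edge set \<Rightarrow> edge \<Rightarrow> edge set" where
  "cmpnt N S e = {g \<in> S. (e,g) \<in> (Rel N S)\<^sup>*}"

lemma exit:
  assumes "S' \<subseteq> cmpnt N S e" "e \<in> S'" "g \<in> cmpnt N S e" "g \<notin> S'"
  shows "\<exists>a\<in>S'. \<exists>b\<in>cmpnt N S e - S'. adj N a b"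
proof -
  have "(e,g) \<in> (Rel N S)\<^sup>*" using assms(3) by (simp add: cmpnt_def)
  thus ?thesis using assms(4)
  proof (induction rule: rtrancl_induct)
    case base thus ?case using assms(2) by blast
  next
    case (step c d)
    show ?case
    proof (cases "c \<in> S'")
      case True
      have "(e,d) \<in> (Rel N S)\<^sup>*" using step(1,2) by (rule rtrancl_into_rtrancl)
      hence "d \<in> cmpnt N S e" using step(2) by (auto simp: cmpnt_def Rel_def)
      thus ?thesis using True step(2,4) by (auto simp: Rel_def)
    next
      case False thus ?thesis using step.IH by blast
    qed
  qed
qed

lemma walk_grow:
  assumes fin: "finite (cmpnt N S e)" and eS: "e \<in> S"
  shows "Suc i \<le> card (cmpnt N S e) \<Longrightarrow> \<exists>S'\<subseteq>cmpnt N S e. card S' = Suc i \<and>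
     (\<exists>w. length w = 2*Suc i - 1 \<and> hd w = e \<and> last w = e \<and> set w = S' \<and> successively (adj N) w)"
proof (induction i)
  case 0
  have "e \<in> cmpnt N S e" using eS by (simp add: cmpnt_def)
  thus ?case by (intro exI[of _ "{e}"] conjI) (auto intro!: exI[of _ "[e]"])
next
  case (Suc i)
  then obtain S' w where S': "S' \<subseteq> cmpnt N S e" "card S' = Suc i" and w: "length w = 2*Suc i - 1" "hd w = e"
    "last w = e" "set w = S'" "successively (adj N) w" by auto
  have "S' \<noteq> cmpnt N S e" using S' Suc.prems by auto
  then obtain g where g: "g \<in> cmpnt N S e" "g \<notin> S'" using S' by blast
  have wne: "w \<noteq> []" using w by auto
  have eS': "e \<in> S'" using w wne by (metis hd_in_set)
  obtain a b where ab: "a \<in> S'" "b \<in> cmpnt N S e - S'" "adj N a b" using exit[OF S'(1) eS' g] by blast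
  obtain idx where idx: "idx < length w" "w ! idx = a" using ab(1) w(4) by (metis in_set_conv_nth)
  define xs where "xs = take (Suc idx) w"
  define ys where "ys = drop (Suc idx) w"
  have wxy: "w = xs @ ys" by (simp add: xs_def ys_def)
  have xne: "xs \<noteq> []" using wne by (simp add: xs_def)
  have lx: "last xs = a" using idx by (simp add: xs_def take_Suc_conv_app_nth)
  let ?w = "xs @ b # a # ys"
  have "successively (adj N) ?w"
    using splice[of "adj N" xs ys a b] w(5) wxy xne lx ab(3) adj_sym by metis
  moreover have "length ?w = 2 * Suc (Suc i) - 1" using w(1) wxy by simp
  moreover have "hd ?w = e" using xne w(2) wxy by simp
  moreover have "last ?w = e"
  proof (cases "ys = []")
    case True thus ?thesis using lx w(3) wxy by simp
  next
    case False thus ?thesis using w(3) wxy by simp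
  qed
  moreover have "set ?w = insert b S'" using w(4) wxy ab(1) by auto
  moreover have "insert b S' \<subseteq> cmpnt N S e" using S' ab by auto
  moreover have "card (insert b S') = Suc (Suc i)" using S' ab fin finite_subset by (metis DiffD2 card_insert_disjoint)
  ultimately show ?case by blast
qed

lemma walk_exists:
  assumes fin: "finite (cmpnt N S e)" and eS: "e \<in> S"
  shows "\<exists>w. length w = 2 * card (cmpnt N S e) - 1 \<and> hd w = e \<and> last w = e \<and> set w = cmpnt N S e
           \<and> successively (adj N) w"
proof -
  have "e \<in> cmpnt N S e" using eS by (simp add: cmpnt_def)
  hence c: "Suc (card (cmpnt N S e) - 1) \<le> card (cmpnt N S e)" using fin by (metis Suc_diff_1 card_gt_0_iff empty_iff le_refl)
  obtain S' where "S' \<subseteq> cmpnt N S e" "card S' = card (cmpnt N S e)" and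
     w: "\<exists>w. length w = 2 * card (cmpnt N S e) - 1 \<and> hd w = e \<and> last w = e \<and> set w = S' \<and> successively (adj N) w"
    using walk_grow[OF fin eS c] c by (metis Suc_le_D diff_Suc_1)
  hence "S' = cmpnt N S e" using fin by (metis card_subset_eq)
  thus ?thesis using w by blast
qed


definition goodw :: "nat \<Rightarrow> edge \<Rightarrow> edge set \<Rightarrow> edge list \<Rightarrow> bool" where
  "goodw N e K w \<longleftrightarrow> length w = 2 * card K - 1 \<and> hd w = e \<and> last w = e \<and> set w = K
     \<and> set w \<subseteq> pos_edges N \<and> successively (adj N) w"

lemma count_sets:
  assumes A: "\<forall>K\<in>\<K>. \<exists>w. goodw N e K w" and m: "m \<ge> 2"
  shows "card {K\<in>\<K>. card K = m} \<le> 18^(2*m-3)"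
proof -
  define f where "f K = butlast (SOME w. goodw N e K w)" for K
  have gw: "goodw N e K (SOME w. goodw N e K w)" if "K \<in> \<K>" for K using A that by (meson someI_ex)
  have fW: "f K \<in> W N e (Suc (2*m-3))" if "K \<in> {K\<in>\<K>. card K = m}" for K
  proof -
    let ?w = "SOME w. goodw N e K w"
    have g: "goodw N e K ?w" using gw that by blast
    have cK: "card K = m" using that by blast
    have l: "length ?w = 2*m - 1" using g cK by (simp add: goodw_def)
    hence wne: "?w \<noteq> []" using m by auto
    have wsplit: "?w = butlast ?w @ [last ?w]" using wne by simp
    have bl: "length (butlast ?w) = Suc (2*m-3)" using l m by simp
    hence bne: "butlast ?w \<noteq> []" by (metis list.size(3) nat.simps(3))
    have ap: "butlast ?w @ [last ?w] = ?w" by (rule append_butlast_last_id[OF wne])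
    have "hd (butlast ?w) = hd ?w" using hd_append2[OF bne, of "[last ?w]"] unfolding ap by simp
    hence "hd (butlast ?w) = e" using g by (simp add: goodw_def)
    moreover have "set (butlast ?w) \<subseteq> pos_edges N"
    proof
      fix y assume "y \<in> set (butlast ?w)"
      hence "y \<in> set ?w" by (rule in_set_butlastD)
      thus "y \<in> pos_edges N" using g by (auto simp: goodw_def)
    qed
    moreover have "successively (adj N) (butlast ?w)"
    proof -
      have "successively (adj N) ?w" using g by (simp add: goodw_def)
      hence "successively (adj N) (butlast ?w @ [last ?w])" unfolding ap .
      thus ?thesis by (simp add: successively_append_iff)
    qed
    ultimately show ?thesis using bl by (simp add: W_def f_def)
  qed
  have inj: "inj_on f {K\<in>\<K>. card K = m}"
  proof (rule inj_onI)
    fix K1 K2 assume a: "K1 \<in> {K\<in>\<K>. card K = m}" "K2 \<in> {K\<in>\<K>. card K = m}" "f K1 = f K2"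
    let ?w1 = "SOME w. goodw N e K1 w" and ?w2 = "SOME w. goodw N e K2 w"
    have g1: "goodw N e K1 ?w1" and g2: "goodw N e K2 ?w2" using gw a by auto
    have ne1: "?w1 \<noteq> []" and ne2: "?w2 \<noteq> []" using g1 g2 m a by (auto simp: goodw_def)
    have eq1: "butlast ?w1 @ [e] = ?w1" using append_butlast_last_id[OF ne1] g1 by (simp add: goodw_def)
    have eq2: "butlast ?w2 @ [e] = ?w2" using append_butlast_last_id[OF ne2] g2 by (simp add: goodw_def)
    have b: "butlast ?w1 = butlast ?w2" using a(3) by (simp add: f_def)
    have "?w1 = ?w2" using eq1 eq2 b by metis
    thus "K1 = K2" using g1 g2 by (simp add: goodw_def)
  qed
  have "card {K\<in>\<K>. card K = m} \<le> card (W N e (Suc (2*m-3)))"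
    using card_inj_on_le[OF inj] fW W_bound by (meson image_subsetI)
  also have "\<dots> \<le> 18^(2*m-3)" using W_bound by blast
  finally show ?thesis .
qed


definition supp :: "nat \<Rightarrow> (edge \<Rightarrow> int) \<Rightarrow> edge set" where
  "supp N \<sigma> = {f \<in> pos_edges N. \<sigma> f \<noteq> 0}"
definition rstr :: "edge set \<Rightarrow> (edge \<Rightarrow> int) \<Rightarrow> edge \<Rightarrow> int" where
  "rstr K \<sigma> = (\<lambda>f. if f \<in> pr K then \<sigma> f else 0)"
definition rrest :: "edge set \<Rightarrow> (edge \<Rightarrow> int) \<Rightarrow> edge \<Rightarrow> int" where
  "rrest K \<sigma> = (\<lambda>f. if f \<in> pr K then 0 else \<sigma> f)"
definition rep :: "nat \<Rightarrow> edge \<Rightarrow> edge" where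
  "rep N f = (if f \<in> pos_edges N then f else rev_edge f)"

lemma rep_pos: "f \<in> edges N \<Longrightarrow> rep N f \<in> pos_edges N"
  using edges_split[of f N] by (auto simp: rep_def)

lemma pr_rep: "K \<subseteq> pos_edges N \<Longrightarrow> f \<in> edges N \<Longrightarrow> f \<in> pr K \<longleftrightarrow> rep N f \<in> K"
  using edges_split[of f N] pos_not_rev[of f N] pos_not_rev[of "rev_edge f" N]
  by (auto simp: rep_def pr_def)

lemma pr_rev: "rev_edge f \<in> pr K \<longleftrightarrow> f \<in> pr K"
  by (auto simp: pr_def)

lemma rep_in_pr: "f \<in> S \<Longrightarrow> rep N f \<in> pr S"
  by (auto simp: rep_def pr_def)

lemma flat_rev: "\<sigma> \<in> flat_configs N n \<Longrightarrow> f \<in> edges N \<Longrightarrow> \<sigma> (rev_edge f) = (- \<sigma> f) mod n"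
  by (auto simp: flat_configs_def)

lemma nz_rep:
  assumes fl: "\<sigma> \<in> flat_configs N n" and f: "f \<in> edges N"
  shows "\<sigma> (rep N f) \<noteq> 0 \<longleftrightarrow> \<sigma> f \<noteq> 0"
proof (cases "f \<in> pos_edges N")
  case True thus ?thesis by (simp add: rep_def)
next
  case False
  have r: "0 \<le> \<sigma> f" "\<sigma> f < n" using fl f by (auto simp: flat_configs_def)
  have "\<sigma> (rev_edge f) = (- \<sigma> f) mod n" using flat_rev[OF fl f] .
  moreover have "(- \<sigma> f) mod n = 0 \<longleftrightarrow> n dvd \<sigma> f" by (simp add: dvd_eq_mod_eq_0[symmetric])
  moreover have "n dvd \<sigma> f \<longleftrightarrow> \<sigma> f = 0" using r by (auto dest: zdvd_imp_le)
  ultimately show ?thesis using False by (simp add: rep_def)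
qed

definition CL :: "nat \<Rightarrow> (edge \<Rightarrow> int) \<Rightarrow> edge set \<Rightarrow> bool" where
  "CL N \<sigma> K \<longleftrightarrow> (\<forall>p\<in>plaquettes. bd p \<subseteq> edges N \<longrightarrow> (\<exists>f\<in>K. f \<in> pr (bd p)) \<longrightarrow>
       (\<forall>g\<in>supp N \<sigma>. g \<in> pr (bd p) \<longrightarrow> g \<in> K))"

lemma cmpnt_closed: "CL N \<sigma> (cmpnt N (supp N \<sigma>) e)"
  unfolding CL_def
proof (intro ballI impI)
  fix p g assume p: "p \<in> plaquettes" "bd p \<subseteq> edges N" and ex: "\<exists>f\<in>cmpnt N (supp N \<sigma>) e. f \<in> pr (bd p)"
    and g: "g \<in> supp N \<sigma>" "g \<in> pr (bd p)"
  from ex obtain f where f: "f \<in> cmpnt N (supp N \<sigma>) e" "f \<in> pr (bd p)" by blast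
  show "g \<in> cmpnt N (supp N \<sigma>) e"
  proof (cases "f = g")
    case True thus ?thesis using f by simp
  next
    case False
    hence "adj N f g" using p f g unfolding adj_def by blast
    hence "(f,g) \<in> Rel N (supp N \<sigma>)" using f g by (auto simp: Rel_def cmpnt_def)
    moreover have "(e,f) \<in> (Rel N (supp N \<sigma>))\<^sup>*" using f by (simp add: cmpnt_def)
    ultimately show ?thesis using g by (auto simp: cmpnt_def intro: rtrancl_into_rtrancl)
  qed
qed

lemma cmpnt_sub: "cmpnt N S e \<subseteq> S" by (auto simp: cmpnt_def)

lemma flat_split:
  assumes n2: "n \<ge> 2" and fl: "\<sigma> \<in> flat_configs N n" and KP: "K \<subseteq> pos_edges N" and cl: "CL N \<sigma> K"
  shows "rstr K \<sigma> \<in> flat_configs N n \<and> rrest K \<sigma> \<in> flat_configs N n"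
proof -
  have out: "\<And>f. f \<notin> edges N \<Longrightarrow> \<sigma> f = 0" and rng: "\<And>f. f \<in> edges N \<Longrightarrow> 0 \<le> \<sigma> f \<and> \<sigma> f < n"
    and rv: "\<And>f. f \<in> edges N \<Longrightarrow> \<sigma> (rev_edge f) = (- \<sigma> f) mod n"
    and pl: "\<And>p. p\<in>plaquettes \<Longrightarrow> bd p \<subseteq> edges N \<Longrightarrow> (\<Sum>e\<in>bd p. \<sigma> e) mod n = 0"
    using fl by (auto simp: flat_configs_def)
  have plq: "(\<Sum>e\<in>bd p. rstr K \<sigma> e) mod n = 0 \<and> (\<Sum>e\<in>bd p. rrest K \<sigma> e) mod n = 0"
    if p: "p \<in> plaquettes" "bd p \<subseteq> edges N" for p
  proof (cases "\<exists>f\<in>K. f \<in> pr (bd p)")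
    case True
    have z: "\<sigma> h = 0" if h: "h \<in> bd p" "h \<notin> pr K" for h
    proof (rule ccontr)
      assume "\<sigma> h \<noteq> 0"
      have hE: "h \<in> edges N" using h p by blast
      have "\<sigma> (rep N h) \<noteq> 0" using nz_rep[OF fl hE] \<open>\<sigma> h \<noteq> 0\<close> by blast
      hence "rep N h \<in> supp N \<sigma>" using rep_pos[OF hE] by (simp add: supp_def)
      moreover have "rep N h \<in> pr (bd p)" using h rep_in_pr by blast
      ultimately have "rep N h \<in> K" using cl True p unfolding CL_def by blast
      thus False using h pr_rep[OF KP hE] by blast
    qed
    have "(\<Sum>e\<in>bd p. rstr K \<sigma> e) = (\<Sum>e\<in>bd p. \<sigma> e)"
      by (rule sum.cong) (auto simp: rstr_def z)
    moreover have "(\<Sum>e\<in>bd p. rrest K \<sigma> e) = 0"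
      by (rule sum.neutral) (auto simp: rrest_def z)
    ultimately show ?thesis using pl p by simp
  next
    case False
    have nk: "h \<notin> pr K" if h: "h \<in> bd p" for h
    proof
      assume "h \<in> pr K"
      have hE: "h \<in> edges N" using h p by blast
      hence "rep N h \<in> K" using pr_rep[OF KP hE] \<open>h \<in> pr K\<close> by blast
      moreover have "rep N h \<in> pr (bd p)" using h rep_in_pr by blast
      ultimately show False using False by blast
    qed
    have "(\<Sum>e\<in>bd p. rstr K \<sigma> e) = 0"
      by (rule sum.neutral) (auto simp: rstr_def nk)
    moreover have "(\<Sum>e\<in>bd p. rrest K \<sigma> e) = (\<Sum>e\<in>bd p. \<sigma> e)"
      by (rule sum.cong) (auto simp: rrest_def nk)
    ultimately show ?thesis using pl p by simp
  qed
  show ?thesis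
    unfolding flat_configs_def
    using out rng rv plq n2 by (auto simp: rstr_def rrest_def pr_rev)
qed


definition hh :: "(int \<Rightarrow> complex) \<Rightarrow> int \<Rightarrow> real" where "hh \<rho> g = Re (\<rho> g) - 1"
definition rw :: "nat \<Rightarrow> (int \<Rightarrow> complex) \<Rightarrow> real \<Rightarrow> (edge \<Rightarrow> int) \<Rightarrow> real" where
  "rw N \<rho> \<kappa> \<sigma> = exp (\<kappa> * (\<Sum>f\<in>edges N. hh \<rho> (\<sigma> f)))"

lemma rw_pos: "rw N \<rho> \<kappa> \<sigma> > 0" by (simp add: rw_def)

lemma weight_rw: "weight N \<rho> \<kappa> \<sigma> = exp (\<kappa> * real (card (edges N))) * rw N \<rho> \<kappa> \<sigma>"
proof -
  have "Re (\<Sum>f\<in>edges N. \<rho> (\<sigma> f)) = (\<Sum>f\<in>edges N. hh \<rho> (\<sigma> f)) + real (card (edges N))"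
    by (simp add: Re_sum hh_def sum_subtractf)
  thus ?thesis unfolding weight_def rw_def by (simp add: distrib_left exp_add)
qed

lemma hh0: "faithful_char n \<rho> \<Longrightarrow> hh \<rho> 0 = 0" by (simp add: hh_def rho0)

lemma rw_split:
  assumes fc: "faithful_char n \<rho>"
  shows "rw N \<rho> \<kappa> \<sigma> = rw N \<rho> \<kappa> (rstr K \<sigma>) * rw N \<rho> \<kappa> (rrest K \<sigma>)"
proof -
  have "(\<Sum>f\<in>edges N. hh \<rho> (\<sigma> f)) = (\<Sum>f\<in>edges N. hh \<rho> (rstr K \<sigma> f)) + (\<Sum>f\<in>edges N. hh \<rho> (rrest K \<sigma> f))"
    unfolding sum.distrib[symmetric] by (rule sum.cong) (auto simp: rstr_def rrest_def hh0[OF fc])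
  thus ?thesis unfolding rw_def by (simp add: distrib_left exp_add)
qed

lemma rw_supp:
  assumes fc: "faithful_char n \<rho>" and fl: "\<tau> \<in> flat_configs N n" and K: "supp N \<tau> = K"
  shows "rw N \<rho> \<kappa> \<tau> = (\<Prod>f\<in>K. exp (2 * \<kappa> * hh \<rho> (\<tau> f)))"
proof -
  let ?P = "pos_edges N"
  have E: "edges N = ?P \<union> rev_edge ` ?P"
  proof
    show "edges N \<subseteq> ?P \<union> rev_edge ` ?P"
    proof
      fix f assume "f \<in> edges N"
      hence "f \<in> ?P \<or> rev_edge f \<in> ?P" by (rule edges_split)
      thus "f \<in> ?P \<union> rev_edge ` ?P"
      proof
        assume r: "rev_edge f \<in> ?P"
        show ?thesis by (rule UnI2, rule image_eqI[OF _ r]) simp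
      qed simp
    qed
    show "?P \<union> rev_edge ` ?P \<subseteq> edges N" using pos_sub rev_edges by blast
  qed
  have dj: "?P \<inter> rev_edge ` ?P = {}" by (auto dest: pos_not_rev)
  have inj: "inj_on rev_edge ?P" unfolding inj_on_def by (metis rev_rev)
  have "(\<Sum>f\<in>edges N. hh \<rho> (\<tau> f)) = (\<Sum>f\<in>?P. hh \<rho> (\<tau> f)) + (\<Sum>f\<in>rev_edge ` ?P. hh \<rho> (\<tau> f))"
    unfolding E by (rule sum.union_disjoint) (use finite_pos dj in auto)
  also have "(\<Sum>f\<in>rev_edge ` ?P. hh \<rho> (\<tau> f)) = (\<Sum>f\<in>?P. hh \<rho> (\<tau> (rev_edge f)))"
    by (simp add: sum.reindex[OF inj] comp_def)
  also have "\<dots> = (\<Sum>f\<in>?P. hh \<rho> (\<tau> f))"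
  proof (rule sum.cong[OF refl])
    fix f assume "f \<in> ?P"
    hence "\<tau> (rev_edge f) = (- \<tau> f) mod n" using flat_rev[OF fl] pos_sub by blast
    thus "hh \<rho> (\<tau> (rev_edge f)) = hh \<rho> (\<tau> f)" by (simp add: hh_def Re_rho_negmod[OF fc])
  qed
  also have "(\<Sum>f\<in>?P. hh \<rho> (\<tau> f)) = (\<Sum>f\<in>K. hh \<rho> (\<tau> f))"
  proof (rule sum.mono_neutral_right[OF finite_pos])
    show "K \<subseteq> ?P" using K by (auto simp: supp_def)
    show "\<forall>i\<in>?P - K. hh \<rho> (\<tau> i) = 0" using K hh0[OF fc] by (auto simp: supp_def)
  qed
  finally have "(\<Sum>f\<in>edges N. hh \<rho> (\<tau> f)) = 2 * (\<Sum>f\<in>K. hh \<rho> (\<tau> f))" by simp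
  moreover have "finite K" using K finite_pos by (auto simp: supp_def)
  ultimately show ?thesis unfolding rw_def by (simp add: exp_sum sum_distrib_left mult.assoc mult.left_commute)
qed


lemma rep_pos_id: "f \<in> pos_edges N \<Longrightarrow> rep N f = f" by (simp add: rep_def)

lemma supp_rstr:
  assumes KP: "K \<subseteq> supp N \<sigma>"
  shows "supp N (rstr K \<sigma>) = K"
proof -
  have KP': "K \<subseteq> pos_edges N" using KP by (auto simp: supp_def)
  have "f \<in> pr K \<longleftrightarrow> f \<in> K" if f: "f \<in> pos_edges N" for f
    using pr_rep[OF KP' subsetD[OF pos_sub f]] rep_pos_id[OF f] by simp
  thus ?thesis using KP KP' by (auto simp: supp_def rstr_def)
qed

lemma flat_out: "\<sigma> \<in> flat_configs N n \<Longrightarrow> f \<notin> edges N \<Longrightarrow> \<sigma> f = 0"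
  unfolding flat_configs_def by blast

lemma flat_range2: "\<sigma> \<in> flat_configs N n \<Longrightarrow> f \<in> edges N \<Longrightarrow> 0 \<le> \<sigma> f \<and> \<sigma> f < n"
  by (auto simp: flat_configs_def)

lemma inj_T:
  assumes fl1: "\<tau>1 \<in> flat_configs N n" and fl2: "\<tau>2 \<in> flat_configs N n"
    and s1: "supp N \<tau>1 = K" and s2: "supp N \<tau>2 = K" and eq: "\<forall>f\<in>K. \<tau>1 f = \<tau>2 f"
  shows "\<tau>1 = \<tau>2"
proof
  fix f
  have pos: "\<tau>1 g = \<tau>2 g" if g: "g \<in> pos_edges N" for g
  proof (cases "g \<in> K")
    case True thus ?thesis using eq by blast
  next
    case False
    hence "g \<notin> supp N \<tau>1" "g \<notin> supp N \<tau>2" using s1 s2 by simp_all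
    thus ?thesis using g by (simp add: supp_def)
  qed
  show "\<tau>1 f = \<tau>2 f"
  proof (cases "f \<in> edges N")
    case False thus ?thesis using flat_out[OF fl1] flat_out[OF fl2] by simp
  next
    case True
    show ?thesis
    proof (cases "f \<in> pos_edges N")
      case True thus ?thesis by (rule pos)
    next
      case False
      hence r: "rev_edge f \<in> pos_edges N" using edges_split[OF \<open>f \<in> edges N\<close>] by blast
      have rE: "rev_edge f \<in> edges N" using r pos_sub by blast
      have "\<tau>1 f = (- \<tau>1 (rev_edge f)) mod n" using flat_rev[OF fl1 rE] by simp
      moreover have "\<tau>2 f = (- \<tau>2 (rev_edge f)) mod n" using flat_rev[OF fl2 rE] by simp
      ultimately show ?thesis using pos[OF r] by simp
    qed
  qed
qed

lemma sumT:
  assumes fc: "faithful_char n \<rho>" and KP: "K \<subseteq> pos_edges N"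
  shows "(\<Sum>\<tau>\<in>{\<tau>\<in>flat_configs N n. supp N \<tau> = K}. rw N \<rho> \<kappa> \<tau>) \<le> alpha0 n \<rho> \<kappa> ^ card K"
proof -
  let ?T = "{\<tau>\<in>flat_configs N n. supp N \<tau> = K}"
  let ?g = "\<lambda>v. exp (2 * \<kappa> * hh \<rho> v)"
  let ?F = "\<lambda>\<phi>. \<Prod>f\<in>K. ?g (\<phi> f)"
  let ?r = "\<lambda>\<tau>. restrict \<tau> K"
  have fK: "finite K" using KP finite_pos finite_subset by blast
  have inj: "inj_on ?r ?T"
  proof (rule inj_onI)
    fix t1 t2 assume a: "t1 \<in> ?T" "t2 \<in> ?T" "?r t1 = ?r t2"
    have "\<forall>f\<in>K. t1 f = t2 f" using a(3) by (metis restrict_apply')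
    thus "t1 = t2" using inj_T a(1,2) by blast
  qed
  have "(\<Sum>\<tau>\<in>?T. rw N \<rho> \<kappa> \<tau>) = (\<Sum>\<tau>\<in>?T. ?F (?r \<tau>))"
  proof (rule sum.cong[OF refl])
    fix \<tau> assume t: "\<tau> \<in> ?T"
    have "rw N \<rho> \<kappa> \<tau> = ?F \<tau>" using rw_supp[OF fc] t by blast
    also have "\<dots> = ?F (?r \<tau>)" by (rule prod.cong) auto
    finally show "rw N \<rho> \<kappa> \<tau> = ?F (?r \<tau>)" .
  qed
  also have "\<dots> = (\<Sum>\<phi>\<in>?r ` ?T. ?F \<phi>)" by (simp add: sum.reindex[OF inj])
  also have "\<dots> \<le> (\<Sum>\<phi>\<in>PiE K (\<lambda>_. {1..<n}). ?F \<phi>)"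
  proof (rule sum_mono2)
    show "finite (PiE K (\<lambda>_. {1..<n}))" using fK by (simp add: finite_PiE)
    show "?r ` ?T \<subseteq> PiE K (\<lambda>_. {1..<n})"
    proof
      fix \<phi> assume "\<phi> \<in> ?r ` ?T"
      then obtain \<tau> where t: "\<tau> \<in> ?T" "\<phi> = ?r \<tau>" by blast
      have "\<tau> f \<in> {1..<n}" if f: "f \<in> K" for f
      proof -
        have "f \<in> pos_edges N" "\<tau> f \<noteq> 0" using t f by (auto simp: supp_def)
        moreover have "0 \<le> \<tau> f \<and> \<tau> f < n" using t subsetD[OF pos_sub \<open>f \<in> pos_edges N\<close>]
          by (intro flat_range2) auto
        ultimately show ?thesis by auto
      qed
      thus "\<phi> \<in> PiE K (\<lambda>_. {1..<n})" using t by auto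
    qed
    show "\<And>\<phi>. \<phi> \<in> PiE K (\<lambda>_. {1..<n}) - ?r ` ?T \<Longrightarrow> 0 \<le> ?F \<phi>" by (simp add: prod_nonneg)
  qed
  also have "\<dots> = (\<Prod>f\<in>K. \<Sum>v\<in>{1..<n}. ?g v)"
    by (rule prod_sum_PiE[symmetric]) (use fK in auto)
  also have "\<dots> = alpha0 n \<rho> \<kappa> ^ card K"
    by (simp add: alpha0_def hh_def)
  finally show ?thesis .
qed


lemma peierls:
  assumes n2: "n \<ge> 2" and fc: "faithful_char n \<rho>"
  shows "(\<Sum>\<sigma>\<in>{\<sigma>\<in>flat_configs N n. \<sigma> e \<noteq> 0}. rw N \<rho> \<kappa> \<sigma>)
     \<le> (\<Sum>K\<in>(\<lambda>\<sigma>. cmpnt N (supp N \<sigma>) e) ` {\<sigma>\<in>flat_configs N n. \<sigma> e \<noteq> 0}. alpha0 n \<rho> \<kappa> ^ card K)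
        * (\<Sum>\<sigma>\<in>flat_configs N n. rw N \<rho> \<kappa> \<sigma>)"
proof -
  let ?B = "{\<sigma>\<in>flat_configs N n. \<sigma> e \<noteq> 0}"
  let ?c = "\<lambda>\<sigma>. cmpnt N (supp N \<sigma>) e"
  let ?Z = "\<Sum>\<sigma>\<in>flat_configs N n. rw N \<rho> \<kappa> \<sigma>"
  have fB: "finite ?B" using finite_flat by simp
  have "(\<Sum>\<sigma>\<in>?B. rw N \<rho> \<kappa> \<sigma>) = (\<Sum>K\<in>?c ` ?B. \<Sum>\<sigma>\<in>{\<sigma>\<in>?B. ?c \<sigma> = K}. rw N \<rho> \<kappa> \<sigma>)"
    by (rule sum.image_gen[OF fB])
  also have "\<dots> \<le> (\<Sum>K\<in>?c ` ?B. alpha0 n \<rho> \<kappa> ^ card K * ?Z)"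
  proof (rule sum_mono)
    fix K assume "K \<in> ?c ` ?B"
    let ?BK = "{\<sigma>\<in>?B. ?c \<sigma> = K}"
    let ?T = "{\<tau>\<in>flat_configs N n. supp N \<tau> = K}"
    let ?F = "\<lambda>\<sigma>. (rstr K \<sigma>, rrest K \<sigma>)"
    have KP: "K \<subseteq> pos_edges N" if "\<sigma> \<in> ?BK" for \<sigma>
      using that cmpnt_sub[of N "supp N \<sigma>" e] by (auto simp: supp_def)
    have props: "rstr K \<sigma> \<in> ?T \<and> rrest K \<sigma> \<in> flat_configs N n" if s: "\<sigma> \<in> ?BK" for \<sigma>
    proof -
      have Ks: "K \<subseteq> supp N \<sigma>" using s cmpnt_sub by blast
      have cl: "CL N \<sigma> K" using s cmpnt_closed by blast
      have "rstr K \<sigma> \<in> flat_configs N n \<and> rrest K \<sigma> \<in> flat_configs N n"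
        using flat_split[OF n2 _ KP[OF s] cl] s by blast
      thus ?thesis using supp_rstr[OF Ks] by simp
    qed
    have inj: "inj_on ?F ?BK"
    proof (rule inj_onI)
      fix s t assume "s \<in> ?BK" "t \<in> ?BK" "?F s = ?F t"
      hence a: "rstr K s = rstr K t" "rrest K s = rrest K t" by auto
      show "s = t"
      proof
        fix f
        have "s f = rstr K s f + rrest K s f" "t f = rstr K t f + rrest K t f"
          by (simp_all add: rstr_def rrest_def)
        thus "s f = t f" using a by simp
      qed
    qed
    have fT: "finite ?T" using finite_flat by simp
    have "(\<Sum>\<sigma>\<in>?BK. rw N \<rho> \<kappa> \<sigma>) = (\<Sum>\<sigma>\<in>?BK. rw N \<rho> \<kappa> (rstr K \<sigma>) * rw N \<rho> \<kappa> (rrest K \<sigma>))"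
      by (rule sum.cong[OF refl]) (rule rw_split[OF fc])
    also have "\<dots> = (\<Sum>q\<in>?F ` ?BK. rw N \<rho> \<kappa> (fst q) * rw N \<rho> \<kappa> (snd q))"
      by (rule sym, rule sum.reindex_cong[OF inj refl]) simp
    also have "\<dots> \<le> (\<Sum>q\<in>?T \<times> flat_configs N n. rw N \<rho> \<kappa> (fst q) * rw N \<rho> \<kappa> (snd q))"
    proof (rule sum_mono2)
      show "finite (?T \<times> flat_configs N n)" using fT finite_flat by simp
      show "?F ` ?BK \<subseteq> ?T \<times> flat_configs N n" using props by blast
      show "\<And>q. q \<in> ?T \<times> flat_configs N n - ?F ` ?BK \<Longrightarrow> 0 \<le> rw N \<rho> \<kappa> (fst q) * rw N \<rho> \<kappa> (snd q)"
        using rw_pos by (simp add: less_imp_le)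
    qed
    also have "\<dots> = (\<Sum>\<tau>\<in>?T. rw N \<rho> \<kappa> \<tau>) * ?Z"
      by (simp add: sum_product sum.cartesian_product case_prod_beta)
    also have "\<dots> \<le> alpha0 n \<rho> \<kappa> ^ card K * ?Z"
    proof (rule mult_right_mono)
      show "0 \<le> ?Z" using rw_pos by (simp add: sum_nonneg less_imp_le)
      show "(\<Sum>\<tau>\<in>?T. rw N \<rho> \<kappa> \<tau>) \<le> alpha0 n \<rho> \<kappa> ^ card K"
      proof (cases "?BK = {}")
        case True thus ?thesis using \<open>K \<in> ?c ` ?B\<close> by blast
      next
        case False
        then obtain \<sigma> where "\<sigma> \<in> ?BK" by blast
        from sumT[OF fc KP[OF this]] show ?thesis .
      qed
    qed
    finally show "(\<Sum>\<sigma>\<in>?BK. rw N \<rho> \<kappa> \<sigma>) \<le> alpha0 n \<rho> \<kappa> ^ card K * ?Z" .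
  qed
  also have "\<dots> = (\<Sum>K\<in>?c ` ?B. alpha0 n \<rho> \<kappa> ^ card K) * ?Z"
    by (simp add: sum_distrib_right)
  finally show ?thesis .
qed


lemma geom:
  fixes a :: real
  assumes a0: "0 \<le> a" and q1: "18^2 * a < 1"
  shows "(\<Sum>m\<in>{8..M}. 18^(2*m-3) * a^m) \<le> 18^13 * a^8 / (1 - 18^2 * a)"
proof -
  let ?q = "18^2 * a :: real"
  let ?f = "\<lambda>m::nat. 18^(2*m-3) * a^m :: real"
  have "(\<Sum>m\<in>{8..M}. ?f m) \<le> (\<Sum>m\<in>(\<lambda>i. i+8) ` {..<M}. ?f m)"
  proof (rule sum_mono2)
    show "finite ((\<lambda>i. i+8) ` {..<M})" by simp
    show "{8..M} \<subseteq> (\<lambda>i. i+8) ` {..<M}"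
    proof
      fix m assume "m \<in> {8..M}"
      hence "m = (m - 8) + 8" "m - 8 < M" by auto
      thus "m \<in> (\<lambda>i. i+8) ` {..<M}" by blast
    qed
    show "\<And>m. m \<in> (\<lambda>i. i+8) ` {..<M} - {8..M} \<Longrightarrow> 0 \<le> ?f m" using a0 by simp
  qed
  also have "\<dots> = (\<Sum>i<M. ?f (i+8))" by (simp add: sum.reindex)
  also have "\<dots> = (\<Sum>i<M. 18^13 * a^8 * ?q^i)"
  proof (rule sum.cong[OF refl])
    fix i :: nat
    have e: "2 * (i + 8) - 3 = 13 + 2 * (i::nat)" by simp
    have "?f (i+8) = 18^13 * (18^2)^i * (a^i * a^8)" unfolding e by (simp add: power_add power_mult)
    thus "?f (i+8) = 18^13 * a^8 * ?q^i" by (simp add: power_mult_distrib)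
  qed
  also have "\<dots> = 18^13 * a^8 * (\<Sum>i<M. ?q^i)" by (simp add: sum_distrib_left)
  also have "\<dots> \<le> 18^13 * a^8 * (1 / (1 - ?q))"
  proof (rule mult_left_mono)
    have q: "?q \<noteq> 1" using q1 by simp
    have "(\<Sum>i<M. ?q^i) = (1 - ?q^M) / (1 - ?q)" using sum_gp_strict[of ?q M] q by (simp only: if_False)
    also have "\<dots> \<le> 1 / (1 - ?q)"
      using q1 a0 by (intro divide_right_mono) auto
    finally show "(\<Sum>i<M. ?q^i) \<le> 1 / (1 - ?q)" .
    show "0 \<le> 18^13 * a^8" using a0 by simp
  qed
  finally show ?thesis by simp
qed


lemma sumK:
  fixes a :: real
  assumes a0: "0 \<le> a" and fin: "finite \<K>"
    and gw: "\<forall>K\<in>\<K>. \<exists>w. goodw N e K w"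
    and cb: "\<forall>K\<in>\<K>. 8 \<le> card K \<and> card K \<le> M"
  shows "(\<Sum>K\<in>\<K>. a ^ card K) \<le> (\<Sum>m\<in>{8..M}. 18^(2*m-3) * a^m)"
proof -
  have "(\<Sum>K\<in>\<K>. a ^ card K) = (\<Sum>m\<in>card ` \<K>. \<Sum>K\<in>{K\<in>\<K>. card K = m}. a ^ card K)"
    by (rule sum.image_gen[OF fin])
  also have "\<dots> = (\<Sum>m\<in>card ` \<K>. real (card {K\<in>\<K>. card K = m}) * a ^ m)"
    by (rule sum.cong[OF refl]) simp
  also have "\<dots> \<le> (\<Sum>m\<in>{8..M}. real (card {K\<in>\<K>. card K = m}) * a ^ m)"
  proof (rule sum_mono2)
    show "card ` \<K> \<subseteq> {8..M}" using cb by auto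
    show "\<And>m. m \<in> {8..M} - card ` \<K> \<Longrightarrow> 0 \<le> real (card {K\<in>\<K>. card K = m}) * a ^ m"
      using a0 by simp
  qed simp
  also have "\<dots> \<le> (\<Sum>m\<in>{8..M}. 18^(2*m-3) * a^m)"
  proof (rule sum_mono)
    fix m assume m: "m \<in> {8..M}"
    have "card {K\<in>\<K>. card K = m} \<le> 18^(2*m-3)" using count_sets[OF gw] m by simp
    hence "real (card {K\<in>\<K>. card K = m}) \<le> real ((18::nat)^(2*m-3))" by (simp only: of_nat_le_iff)
    hence "real (card {K\<in>\<K>. card K = m}) \<le> 18^(2*m-3)" by simp
    thus "real (card {K\<in>\<K>. card K = m}) * a ^ m \<le> 18^(2*m-3) * a^m"
      using a0 by (simp add: mult_right_mono)
  qed
  finally show ?thesis .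
qed

lemma alpha_nonneg: "0 \<le> alpha0 n \<rho> \<kappa>"
  by (simp add: alpha0_def sum_nonneg)

theorem mainTheorem16:
  fixes N :: nat and n :: int and \<rho> :: "int \<Rightarrow> complex" and \<kappa> :: real and e :: edge
  assumes "n \<ge> 2"
    and "faithful_char n \<rho>"
    and "\<kappa> \<ge> 0"
    and "18^2 * alpha0 n \<rho> \<kappa> * (2 + alpha0 n \<rho> \<kappa>) < 1"
    and "e \<in> pos_edges N"
    and "bdS (cobdS (bdS (cobd e))) \<subseteq> edges N"
  shows "mu N n \<rho> \<kappa> {\<sigma>'. \<sigma>' e \<noteq> 0}
           \<le> (18^13 / (1 - 18^2 * alpha0 n \<rho> \<kappa>)) * alpha0 n \<rho> \<kappa> ^ 8"
proof -
  note n2 = assms(1) and fc = assms(2) and eP = assms(5) and H = assms(6)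
  let ?a = "alpha0 n \<rho> \<kappa>"
  let ?B = "{\<sigma>\<in>flat_configs N n. \<sigma> e \<noteq> 0}"
  let ?c = "\<lambda>\<sigma>. cmpnt N (supp N \<sigma>) e"
  let ?Z = "\<Sum>\<sigma>\<in>flat_configs N n. rw N \<rho> \<kappa> \<sigma>"
  let ?C = "exp (\<kappa> * real (card (edges N)))"
  have a0: "0 \<le> ?a" by (rule alpha_nonneg)
  have q1: "18^2 * ?a < 1"
  proof -
    have "18^2 * ?a * 1 \<le> 18^2 * ?a * (2 + ?a)" using a0 by (intro mult_left_mono) auto
    thus ?thesis using assms(4) by simp
  qed
  obtain x j where e: "e = (x, x + unitv j)" using eP by (auto simp: pos_edges_def)
  have Zpos: "0 < ?Z"
  proof -
    have "(\<lambda>_. 0) \<in> flat_configs N n" using zero_flat[OF n2] .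
    thus ?thesis using finite_flat rw_pos by (intro sum_pos2[where i="\<lambda>_. 0"]) (auto simp: less_imp_le)
  qed
  have mu_eq: "mu N n \<rho> \<kappa> {\<sigma>'. \<sigma>' e \<noteq> 0} = (\<Sum>\<sigma>\<in>?B. rw N \<rho> \<kappa> \<sigma>) / ?Z"
  proof -
    have s: "{\<sigma>'. \<sigma>' e \<noteq> 0} \<inter> flat_configs N n = ?B" by auto
    have "mu N n \<rho> \<kappa> {\<sigma>'. \<sigma>' e \<noteq> 0} = (?C * (\<Sum>\<sigma>\<in>?B. rw N \<rho> \<kappa> \<sigma>)) / (?C * ?Z)"
      unfolding mu_def s weight_rw by (simp add: sum_distrib_left)
    thus ?thesis by simp
  qed
  have props: "(\<exists>w. goodw N e K w) \<and> 8 \<le> card K \<and> card K \<le> card (pos_edges N)" if K: "K \<in> ?c ` ?B" for K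
  proof -
    obtain \<sigma> where s: "\<sigma> \<in> ?B" and Kc: "K = ?c \<sigma>" using K by blast
    have fl: "\<sigma> \<in> flat_configs N n" using s by blast
    have eS: "e \<in> supp N \<sigma>" using s eP by (simp add: supp_def)
    have Ks: "K \<subseteq> supp N \<sigma>" using Kc cmpnt_sub by blast
    have KP: "K \<subseteq> pos_edges N" using Ks by (auto simp: supp_def)
    have fK: "finite K" using KP finite_pos finite_subset by blast
    obtain w where w: "length w = 2 * card K - 1" "hd w = e" "last w = e" "set w = K" "successively (adj N) w"
      using walk_exists[of N "supp N \<sigma>" e] fK eS Kc by blast
    have g: "goodw N e K w" using w KP by (simp add: goodw_def)
    have cl: "CL N \<sigma> K" using Kc cmpnt_closed by blast
    have tf: "rstr K \<sigma> \<in> flat_configs N n" using flat_split[OF n2 fl KP cl] by blast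
    have eK: "e \<in> K" using eS Kc by (simp add: cmpnt_def)
    have "rstr K \<sigma> e = \<sigma> e" using eK by (simp add: rstr_def pr_def)
    hence ne: "rstr K \<sigma> (x, x + unitv j) \<noteq> 0" using s e by simp
    have "8 \<le> card {f \<in> pos_edges N. rstr K \<sigma> f \<noteq> 0}"
      by (rule lower8[OF n2 tf eP[unfolded e] H[unfolded e] ne])
    moreover have "{f \<in> pos_edges N. rstr K \<sigma> f \<noteq> 0} = K"
      using supp_rstr[OF Ks] by (simp add: supp_def)
    ultimately have "8 \<le> card K" by simp
    moreover have "card K \<le> card (pos_edges N)" using KP finite_pos by (rule card_mono[rotated])
    ultimately show ?thesis using g by blast
  qed
  have finK: "finite (?c ` ?B)" using finite_flat by simp
  have "(\<Sum>\<sigma>\<in>?B. rw N \<rho> \<kappa> \<sigma>) \<le> (\<Sum>K\<in>?c ` ?B. ?a ^ card K) * ?Z"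
    by (rule peierls[OF n2 fc])
  hence "mu N n \<rho> \<kappa> {\<sigma>'. \<sigma>' e \<noteq> 0} \<le> (\<Sum>K\<in>?c ` ?B. ?a ^ card K)"
    unfolding mu_eq using Zpos by (simp add: divide_le_eq)
  also have "\<dots> \<le> (\<Sum>m\<in>{8..card (pos_edges N)}. 18^(2*m-3) * ?a^m)"
    by (rule sumK[OF a0 finK]) (use props in blast)+
  also have "\<dots> \<le> 18^13 * ?a^8 / (1 - 18^2 * ?a)"
    by (rule geom[OF a0 q1])
  finally show ?thesis by simp
qed

end
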